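(* Let $(S,V)$ be a complete semiring-semimodule pair, let $S'\subseteq S$ contain $0$ and $1$, let $n\ge1$, let $\Gamma$ be an alphabet, and let $M\in (S'^{n\times n})^{\Gamma^*\times\Gamma^*}$ be a pushdown transition matrix. Then for all $0\le l\le n$, the pair of families $\big(((M^* )_{p,\epsilon})_{p\in\Gamma},((M^{\omega,l})_p)_{p\in\Gamma}\big)$ is a solution of the algebraic system $$y_p=\sum_{\pi\in\Gamma^*}M_{p,\pi}\,y_\pi,\qquad p\in\Gamma,$$ over the quemiring $S^{n\times n}\times V^n$; that is, setting $x_p=(M^* )_{p,\epsilon}$ and $z_p=(M^{\omega,l})_p$, for all $p\in\Gamma$: $$x_p=\sum_{\pi\in\Gamma^*}M_{p,\pi}x_\pi\quad\text{and}\quad z_p=\sum_{\pi=p_1\dots p_k\in\Gamma^+}M_{p,\pi}\sum_{1\le j\le k}x_{p_1}\cdots x_{p_{j-1}}z_{p_j},$$ where $x_{p_1\dots p_k}=x_{p_1}\cdots x_{p_k}$ and $x_\epsilon$ is the $n\times n$ identity matrix.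
   Context: A complete semiring-semimodule pair $(S,V)$ (in the sense of Ésik and Kuich, "Modern Automata Theory") consists of a complete starsemiring $S$ (arbitrary sums with infinite associativity/commutativity/distributivity laws, star $s^*=\sum_{j\ge0}s^j$) and a complete $S$-semimodule $V$, with infinite products $\prod_{j\ge1}s_j\in V$ of sequences in $S$ satisfying the axioms of that framework; then $(S^{n\times n},V^n)$ is again such a pair. The quemiring $S^{n\times n}\times V^n$ has componentwise sum and product $(s,u)(s',u')=(ss',u+su')$; in the system, $y_p=(x_p,z_p)$ and $y_{p_1\dots p_k}=y_{p_1}\cdots y_{p_k}$ (quemiring product), $y_\epsilon=(E,0)$, and a matrix $A\in S^{n\times n}$ acts by $A(s,u)=(As,Au)$; the two displayed equations are exactly the componentwise form of the system. $M\in (S'^{n\times n})^{\Gamma^*\times\Gamma^*}$ is a $\Gamma^*\times\Gamma^*$ matrix with $n\times n$ blocks over $S'$; it is a pushdown transition matrix if (i) for each $p\in\Gamma$ only finitely many blocks $M_{p,\pi}$ are nonzero, and (ii) $M_{\pi_1,\pi_2}=M_{p,\pi}$ if $\pi_1=p\pi'$, $\pi_2=\pi\pi'$ for some $p\in\Gamma$, $\pi,\pi'\in\Gamma^*$, and $0$ otherwise. $M^*=\sum_{m\ge0}M^m$ with blocks $(M^* )_{\pi,\pi'}$. Let $P_l=\{(j_1,j_2,\dots)\in\{1,\dots,n\}^\omega\mid j_t\le l\text{ for infinitely many }t\}$; $M^{\omega,l}\in (V^n)^{\Gamma^*}$ is given by $((M^{\omega,l})_\pi)_i=\sum_{\pi_1,\pi_2,\ldots\in\Gamma^*}\sum_{(j_1,j_2,\ldots)\in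 P_l}(M_{\pi,\pi_1})_{i,j_1}(M_{\pi_1,\pi_2})_{j_1,j_2}\cdots$. *)

theory Defs
  imports Main
begin

text \<open>Universal index type for complete sums. Families indexed by sets of
  any other type are summed by transporting them injectively into this type
  (see Sum_over); by the partition axiom the result does not depend on the
  chosen injection.\<close>
type_synonym idx = "nat \<Rightarrow> nat"

definition Sum_over :: "(idx set \<Rightarrow> (idx \<Rightarrow> 'a) \<Rightarrow> 'a) \<Rightarrow> 'x set \<Rightarrow> ('x \<Rightarrow> 'a) \<Rightarrow> 'a" where
  "Sum_over \<sigma> A f =
     (let h = (SOME h :: 'x \<Rightarrow> idx. inj_on h A) in \<sigma> (h ` A) (\<lambda>i. f (inv_into A h i)))"

definition complete_monoid_sum :: "(idx set \<Rightarrow> (idx \<Rightarrow> 'a::comm_monoid_add) \<Rightarrow> 'a) \<Rightarrow> bool" where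
  "complete_monoid_sum \<sigma> \<longleftrightarrow>
     (\<forall>f. \<sigma> {} f = 0) \<and>
     (\<forall>f j. \<sigma> {j} f = f j) \<and>
     (\<forall>f j k. j \<noteq> k \<longrightarrow> \<sigma> {j, k} f = f j + f k) \<and>
     (\<forall>I f g. (\<forall>i\<in>I. f i = g i) \<longrightarrow> \<sigma> I f = \<sigma> I g) \<and>
     (\<forall>(J::idx set) (P::idx \<Rightarrow> idx set) f.
        (\<forall>j\<in>J. \<forall>j'\<in>J. j \<noteq> j' \<longrightarrow> P j \<inter> P j' = {}) \<longrightarrow>
        \<sigma> (\<Union>j\<in>J. P j) f = \<sigma> J (\<lambda>j. \<sigma> (P j) f))"

text \<open>Complete semiring-semimodule pair (S,V): ssum and vsum are the complete sums,
  smult the action of S on V, omega the infinite product of a sequence in S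
  (indexed from 0 instead of 1).\<close>
locale complete_ss_pair =
  fixes ssum :: "idx set \<Rightarrow> (idx \<Rightarrow> 's::semiring_1) \<Rightarrow> 's"
    and vsum :: "idx set \<Rightarrow> (idx \<Rightarrow> 'v::comm_monoid_add) \<Rightarrow> 'v"
    and smult :: "'s \<Rightarrow> 'v \<Rightarrow> 'v"
    and omega :: "(nat \<Rightarrow> 's) \<Rightarrow> 'v"
  assumes ssum_complete: "complete_monoid_sum ssum"
    and ssum_distl: "\<And>I a f. ssum I (\<lambda>i. a * f i) = a * ssum I f"
    and ssum_distr: "\<And>I a f. ssum I (\<lambda>i. f i * a) = ssum I f * a"
    and vsum_complete: "complete_monoid_sum vsum"
    and smult_add_left: "\<And>s s' v. smult (s + s') v = smult s v + smult s' v"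
    and smult_add_right: "\<And>s v v'. smult s (v + v') = smult s v + smult s v'"
    and smult_assoc: "\<And>s s' v. smult (s * s') v = smult s (smult s' v)"
    and smult_one: "\<And>v. smult 1 v = v"
    and smult_zero_left: "\<And>v. smult 0 v = 0"
    and smult_zero_right: "\<And>s. smult s 0 = 0"
    and smult_vsum: "\<And>s I f. smult s (vsum I f) = vsum I (\<lambda>i. smult s (f i))"
    and smult_ssum: "\<And>I f v. smult (ssum I f) v = vsum I (\<lambda>i. smult (f i) v)"
    and omega_unfold: "\<And>s. omega s = smult (s 0) (omega (\<lambda>j. s (Suc j)))"
    and omega_group: "\<And>s k. strict_mono k \<Longrightarrow> k 0 = 0 \<Longrightarrow>
         omega s = omega (\<lambda>j. prod_list (map s [k j..<k (Suc j)]))"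
    and omega_sum: "\<And>(I::nat \<Rightarrow> idx set) (a::nat \<Rightarrow> idx \<Rightarrow> 's).
         omega (\<lambda>j. ssum (I j) (a j)) =
         Sum_over vsum {f. \<forall>j. f j \<in> I j} (\<lambda>f. omega (\<lambda>j. a j (f j)))"

text \<open>n x n matrices over S as functions nat => nat => S, indices 0..n-1.\<close>
definition mat_mult :: "nat \<Rightarrow> (nat \<Rightarrow> nat \<Rightarrow> 's::semiring_1) \<Rightarrow> (nat \<Rightarrow> nat \<Rightarrow> 's) \<Rightarrow> nat \<Rightarrow> nat \<Rightarrow> 's" where
  "mat_mult n A B = (\<lambda>i j. \<Sum>k<n. A i k * B k j)"

definition mat_one :: "nat \<Rightarrow> nat \<Rightarrow> nat \<Rightarrow> 's::semiring_1" where
  "mat_one n = (\<lambda>i j. if i = j then 1 else 0)"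

definition mat_listprod :: "nat \<Rightarrow> (nat \<Rightarrow> nat \<Rightarrow> 's::semiring_1) list \<Rightarrow> nat \<Rightarrow> nat \<Rightarrow> 's" where
  "mat_listprod n As = foldr (mat_mult n) As (mat_one n)"

definition mat_vec :: "('s \<Rightarrow> 'v \<Rightarrow> 'v) \<Rightarrow> nat \<Rightarrow> (nat \<Rightarrow> nat \<Rightarrow> 's) \<Rightarrow> (nat \<Rightarrow> 'v::comm_monoid_add) \<Rightarrow> nat \<Rightarrow> 'v" where
  "mat_vec smult n A u = (\<lambda>i. \<Sum>k<n. smult (A i k) (u k))"

text \<open>Gamma^* x Gamma^* matrices with n x n blocks.\<close>
type_synonym ('g, 's) bmat = "'g list \<Rightarrow> 'g list \<Rightarrow> nat \<Rightarrow> nat \<Rightarrow> 's"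

definition bmat_mult :: "(idx set \<Rightarrow> (idx \<Rightarrow> 's::semiring_1) \<Rightarrow> 's) \<Rightarrow> nat \<Rightarrow> ('g, 's) bmat \<Rightarrow> ('g, 's) bmat \<Rightarrow> ('g, 's) bmat" where
  "bmat_mult ssum n A B = (\<lambda>\<pi>1 \<pi>2 i j. Sum_over ssum UNIV (\<lambda>\<pi>. \<Sum>k<n. A \<pi>1 \<pi> i k * B \<pi> \<pi>2 k j))"

definition bmat_one :: "('g, 's::semiring_1) bmat" where
  "bmat_one = (\<lambda>\<pi>1 \<pi>2 i j. if \<pi>1 = \<pi>2 \<and> i = j then 1 else 0)"

fun bmat_pow :: "(idx set \<Rightarrow> (idx \<Rightarrow> 's::semiring_1) \<Rightarrow> 's) \<Rightarrow> nat \<Rightarrow> ('g, 's) bmat \<Rightarrow> nat \<Rightarrow> ('g, 's) bmat" where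
  "bmat_pow ssum n M 0 = bmat_one"
| "bmat_pow ssum n M (Suc m) = bmat_mult ssum n (bmat_pow ssum n M m) M"

definition bmat_star :: "(idx set \<Rightarrow> (idx \<Rightarrow> 's::semiring_1) \<Rightarrow> 's) \<Rightarrow> nat \<Rightarrow> ('g, 's) bmat \<Rightarrow> ('g, 's) bmat" where
  "bmat_star ssum n M = (\<lambda>\<pi>1 \<pi>2 i j. Sum_over ssum UNIV (\<lambda>m::nat. bmat_pow ssum n M m \<pi>1 \<pi>2 i j))"

text \<open>P_l with 0-based state indices: j_t \<le> l (1-based) becomes j_t < l (0-based).\<close>
definition Pl :: "nat \<Rightarrow> nat \<Rightarrow> (nat \<Rightarrow> nat) set" where
  "Pl n l = {js. (\<forall>t. js t < n) \<and> infinite {t. js t < l}}"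

definition bmat_omega :: "(idx set \<Rightarrow> (idx \<Rightarrow> 'v::comm_monoid_add) \<Rightarrow> 'v) \<Rightarrow> ((nat \<Rightarrow> 's) \<Rightarrow> 'v)
    \<Rightarrow> nat \<Rightarrow> nat \<Rightarrow> ('g, 's) bmat \<Rightarrow> 'g list \<Rightarrow> nat \<Rightarrow> 'v" where
  "bmat_omega vsum omega n l M = (\<lambda>\<pi> i.
     Sum_over vsum UNIV (\<lambda>\<pi>s :: nat \<Rightarrow> 'g list.
       Sum_over vsum (Pl n l) (\<lambda>js.
         omega (\<lambda>t. M (case_nat \<pi> \<pi>s t) (\<pi>s t) (case_nat i js t) (js t)))))"

definition pushdown_tm :: "nat \<Rightarrow> ('g, 's::zero) bmat \<Rightarrow> bool" where
  "pushdown_tm n M \<longleftrightarrow>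
     (\<forall>p. finite {\<pi>. \<exists>i<n. \<exists>j<n. M [p] \<pi> i j \<noteq> 0}) \<and>
     (\<forall>p \<pi> \<pi>' i j. i < n \<longrightarrow> j < n \<longrightarrow> M (p # \<pi>') (\<pi> @ \<pi>') i j = M [p] \<pi> i j) \<and>
     (\<forall>\<pi>1 \<pi>2 i j. i < n \<longrightarrow> j < n \<longrightarrow> \<not> (\<exists>p \<pi> \<pi>'. \<pi>1 = p # \<pi>' \<and> \<pi>2 = \<pi> @ \<pi>') \<longrightarrow>
        M \<pi>1 \<pi>2 i j = 0)"

end

theory Submission
  imports Defs "HOL-Library.Countable_Set"
begin


definition small :: "'x set \<Rightarrow> bool" where
  "small A \<longleftrightarrow> (\<exists>h::'x\<Rightarrow>idx. inj_on h A)"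

lemma small_subset: "small A \<Longrightarrow> B \<subseteq> A \<Longrightarrow> small B"
  unfolding small_def by (meson inj_on_subset)

lemma small_countable: "countable A \<Longrightarrow> small A"
  unfolding small_def
  by (rule exI[of _ "\<lambda>x k. to_nat_on A x"]) (auto simp: inj_on_def dest: fun_cong)

lemma small_inj: "small (g ` A) \<Longrightarrow> inj_on g A \<Longrightarrow> small A"
  unfolding small_def by (metis comp_inj_on)

lemma small_prod: "small A \<Longrightarrow> small B \<Longrightarrow> small (A \<times> B)"
proof -
  assume "small A" "small B"
  then obtain ha hb where ha: "inj_on (ha::_\<Rightarrow>idx) A" and hb: "inj_on (hb::_\<Rightarrow>idx) B"
    unfolding small_def by blast
  let ?h = "\<lambda>(a,b). (\<lambda>k::nat. if even k then ha a (k div 2) else hb b (k div 2))"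
  have "inj_on ?h (A \<times> B)"
  proof (rule inj_onI, clarsimp)
    fix a b a' b' assume as: "a \<in> A" "b \<in> B" "a' \<in> A" "b' \<in> B"
      and eq: "(\<lambda>k::nat. if even k then ha a (k div 2) else hb b (k div 2)) =
               (\<lambda>k. if even k then ha a' (k div 2) else hb b' (k div 2))"
    have "ha a = ha a'"
    proof
      fix k show "ha a k = ha a' k" using fun_cong[OF eq, of "2*k"] by simp
    qed
    moreover have "hb b = hb b'"
    proof
      fix k show "hb b k = hb b' k" using fun_cong[OF eq, of "2*k+1"] by simp
    qed
    ultimately show "a = a' \<and> b = b'" using ha hb as by (auto dest: inj_onD)
  qed
  then show ?thesis unfolding small_def by blast
qed

lemma small_funs: "small (A :: (nat \<Rightarrow> 'a::countable) set)"
  unfolding small_def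
  by (rule exI[of _ "\<lambda>f k. to_nat (f k)"]) (auto simp: inj_on_def fun_eq_iff)

lemma small_cnt: "small (A :: 'a::countable set)"
  by (rule small_countable) simp

context
  fixes \<sigma> :: "idx set \<Rightarrow> (idx \<Rightarrow> 'a::comm_monoid_add) \<Rightarrow> 'a"
  assumes cms: "complete_monoid_sum \<sigma>"
begin

lemmas cmsD = cms[unfolded complete_monoid_sum_def]
lemma cms_empty: "\<sigma> {} f = 0" using conjunct1[OF cmsD] by blast
lemma cms_single: "\<sigma> {j} f = f j" using conjunct1[OF conjunct2[OF cmsD]] by blast
lemma cms_two: "j \<noteq> k \<Longrightarrow> \<sigma> {j, k} f = f j + f k"
  using conjunct1[OF conjunct2[OF conjunct2[OF cmsD]]] by blast
lemma cms_cong: "(\<And>i. i \<in> I \<Longrightarrow> f i = g i) \<Longrightarrow> \<sigma> I f = \<sigma> I g"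
  using conjunct1[OF conjunct2[OF conjunct2[OF conjunct2[OF cmsD]]]] by blast
lemma cms_part: "(\<And>j j'. j \<in> J \<Longrightarrow> j' \<in> J \<Longrightarrow> j \<noteq> j' \<Longrightarrow> P j \<inter> P j' = {}) \<Longrightarrow>
   \<sigma> (\<Union>j\<in>J. P j) f = \<sigma> J (\<lambda>j. \<sigma> (P j) f)"
  using conjunct2[OF conjunct2[OF conjunct2[OF conjunct2[OF cmsD]]]] by blast
lemma cms_zero: "\<sigma> J (\<lambda>_. 0) = 0"
  using cms_part[of J "\<lambda>_. {}" "\<lambda>_. 0"] by (simp add: cms_empty)

lemma indep:
  assumes h1: "inj_on h1 A" and h2: "inj_on h2 A"
  shows "\<sigma> (h1 ` A) (\<lambda>i. f (inv_into A h1 i)) = \<sigma> (h2 ` A) (\<lambda>i. f (inv_into A h2 i))"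
proof -
  have U: "h2 ` A = (\<Union>j\<in>h1 ` A. {h2 (inv_into A h1 j)})"
    using h1 by auto
  have "\<sigma> (h2 ` A) (\<lambda>i. f (inv_into A h2 i))
      = \<sigma> (h1 ` A) (\<lambda>j. \<sigma> {h2 (inv_into A h1 j)} (\<lambda>i. f (inv_into A h2 i)))"
    unfolding U
    by (rule cms_part) (use h1 h2 in \<open>auto simp: inv_into_into dest: inj_onD\<close>)
  also have "\<dots> = \<sigma> (h1 ` A) (\<lambda>i. f (inv_into A h1 i))"
    by (rule cms_cong) (auto simp: cms_single h1 h2 inv_into_into)
  finally show ?thesis by simp
qed

lemma SO_eq: "inj_on h A \<Longrightarrow> Sum_over \<sigma> A f = \<sigma> (h ` A) (\<lambda>i. f (inv_into A h i))"
  unfolding Sum_over_def Let_def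
  by (rule indep) (auto intro: someI[where P="\<lambda>h. inj_on h A"])

lemma SO_cong: "(\<And>x. x \<in> A \<Longrightarrow> f x = g x) \<Longrightarrow> Sum_over \<sigma> A f = Sum_over \<sigma> A g"
  unfolding Sum_over_def Let_def by (rule cms_cong) (simp add: inv_into_into)

lemma SO_zero: "Sum_over \<sigma> A (\<lambda>_. 0) = 0"
  unfolding Sum_over_def Let_def by (rule cms_zero)

lemma SO_empty: "Sum_over \<sigma> {} f = 0"
  unfolding Sum_over_def Let_def by (simp add: cms_empty)

lemma SO_single: "Sum_over \<sigma> {a} f = f a"
proof -
  have i: "inj_on (\<lambda>_ _. 0::nat) {a}" by simp
  show ?thesis by (simp only: SO_eq[OF i] image_insert image_empty cms_single inv_into_f_f[OF i singletonI])
qed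

lemma SO_two: "a \<noteq> b \<Longrightarrow> Sum_over \<sigma> {a, b} f = f a + f b"
proof -
  assume ab: "a \<noteq> b"
  let ?h = "\<lambda>x (_::nat). if x = a then 0 else (1::nat)"
  have inj: "inj_on ?h {a, b}" using ab by (auto simp: inj_on_def dest: fun_cong)
  have ne: "?h a \<noteq> ?h b" using ab by (auto dest: fun_cong)
  have "Sum_over \<sigma> {a, b} f = \<sigma> {?h a, ?h b} (\<lambda>i. f (inv_into {a, b} ?h i))"
    using SO_eq[OF inj, of f] by simp
  also have "\<dots> = f (inv_into {a, b} ?h (?h a)) + f (inv_into {a, b} ?h (?h b))"
    using cms_two[OF ne] .
  also have "\<dots> = f a + f b"
  proof -
    have "inv_into {a, b} ?h (?h a) = a" "inv_into {a, b} ?h (?h b) = b"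
      by (rule inv_into_f_f[OF inj], simp)+
    then show ?thesis by (simp only:)
  qed
  finally show ?thesis .
qed

lemma SO_reindex:
  assumes "small A" "inj_on g A"
  shows "Sum_over \<sigma> (g ` A) f = Sum_over \<sigma> A (\<lambda>x. f (g x))"
proof -
  obtain h where h: "inj_on (h::_\<Rightarrow>idx) A" using assms(1) unfolding small_def by blast
  let ?h = "h \<circ> inv_into A g"
  have inj: "inj_on ?h (g ` A)"
    using h assms(2) by (auto simp: inj_on_def inv_into_into)
  have im: "?h ` (g ` A) = h ` A" using assms(2) by (force simp: image_comp)
  have "Sum_over \<sigma> (g ` A) f = \<sigma> (?h ` (g ` A)) (\<lambda>i. f (inv_into (g ` A) ?h i))"
    by (rule SO_eq[OF inj])
  also have "\<dots> = \<sigma> (h ` A) (\<lambda>i. f (g (inv_into A h i)))"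
    unfolding im
  proof (rule cms_cong)
    fix i assume "i \<in> h ` A"
    then obtain a where a: "a \<in> A" "i = h a" by blast
    have "inv_into (g ` A) ?h i = g a"
      by (rule inv_into_f_eq[OF inj]) (use a assms(2) in auto)
    then show "f (inv_into (g ` A) ?h i) = f (g (inv_into A h i))" using a h by simp
  qed
  also have "\<dots> = Sum_over \<sigma> A (\<lambda>x. f (g x))" by (rule SO_eq[OF h, symmetric])
  finally show ?thesis .
qed

lemma SO_part:
  assumes sA: "small (\<Union>j\<in>J. B j)" and sJ: "small J"
    and disj: "\<And>j j'. j \<in> J \<Longrightarrow> j' \<in> J \<Longrightarrow> j \<noteq> j' \<Longrightarrow> B j \<inter> B j' = {}"
  shows "Sum_over \<sigma> (\<Union>j\<in>J. B j) f = Sum_over \<sigma> J (\<lambda>j. Sum_over \<sigma> (B j) f)"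
proof -
  let ?A = "\<Union>j\<in>J. B j"
  obtain h where h: "inj_on (h::_\<Rightarrow>idx) ?A" using sA unfolding small_def by blast
  obtain g where g: "inj_on (g::_\<Rightarrow>idx) J" using sJ unfolding small_def by blast
  have U: "h ` ?A = (\<Union>k\<in>g ` J. h ` B (inv_into J g k))" using g by auto
  have "Sum_over \<sigma> ?A f = \<sigma> (h ` ?A) (\<lambda>i. f (inv_into ?A h i))" by (rule SO_eq[OF h])
  also have "\<dots> = \<sigma> (g ` J) (\<lambda>k. \<sigma> (h ` B (inv_into J g k)) (\<lambda>i. f (inv_into ?A h i)))"
    unfolding U
  proof (rule cms_part)
    fix k k' assume "k \<in> g ` J" "k' \<in> g ` J" "k \<noteq> k'"
    then obtain j j' where "j \<in> J" "j' \<in> J" "k = g j" "k' = g j'" "j \<noteq> j'" by blast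
    have d: "B j \<inter> B j' = {}" using disj \<open>j \<in> J\<close> \<open>j' \<in> J\<close> \<open>j \<noteq> j'\<close> by blast
    have ij: "inv_into J g k = j" "inv_into J g k' = j'"
      using g \<open>j \<in> J\<close> \<open>j' \<in> J\<close> \<open>k = g j\<close> \<open>k' = g j'\<close> by auto
    show "h ` B (inv_into J g k) \<inter> h ` B (inv_into J g k') = {}"
    proof (rule ccontr)
      assume "h ` B (inv_into J g k) \<inter> h ` B (inv_into J g k') \<noteq> {}"
      then obtain b b' where bb: "b \<in> B j" "b' \<in> B j'" "h b = h b'" unfolding ij by blast
      have "b \<in> ?A" "b' \<in> ?A" using bb \<open>j \<in> J\<close> \<open>j' \<in> J\<close> by blast+
      then have "b = b'" by (meson h bb(3) inj_onD)
      then show False using d bb by blast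
    qed
  qed
  also have "\<dots> = \<sigma> (g ` J) (\<lambda>k. Sum_over \<sigma> (B (inv_into J g k)) f)"
  proof (rule cms_cong)
    fix k assume k: "k \<in> g ` J"
    let ?j = "inv_into J g k"
    have j: "?j \<in> J" using k by (rule inv_into_into)
    have hB: "inj_on h (B ?j)" using h by (rule inj_on_subset) (use j in auto)
    have "\<sigma> (h ` B ?j) (\<lambda>i. f (inv_into ?A h i)) = \<sigma> (h ` B ?j) (\<lambda>i. f (inv_into (B ?j) h i))"
    proof (rule cms_cong)
      fix i assume "i \<in> h ` B ?j"
      then obtain b where b: "b \<in> B ?j" "i = h b" by blast
      have "b \<in> ?A" using b j by blast
      then show "f (inv_into ?A h i) = f (inv_into (B ?j) h i)"
        using b inv_into_f_f[OF h \<open>b \<in> ?A\<close>] inv_into_f_f[OF hB b(1)] by simp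
    qed
    also have "\<dots> = Sum_over \<sigma> (B ?j) f" by (rule SO_eq[OF hB, symmetric])
    finally show "\<sigma> (h ` B ?j) (\<lambda>i. f (inv_into ?A h i)) = Sum_over \<sigma> (B ?j) f" .
  qed
  also have "\<dots> = Sum_over \<sigma> J (\<lambda>j. Sum_over \<sigma> (B j) f)" by (rule SO_eq[OF g, symmetric])
  finally show ?thesis .
qed

lemma small_bool: "small (X::bool set)" by (rule small_cnt)

lemma SO_bool: "Sum_over \<sigma> (UNIV::bool set) g = g True + g False"
  using SO_two[of True False g] by (simp add: insert_commute UNIV_bool)

lemma SO_split:
  assumes "small A"
  shows "Sum_over \<sigma> A f = Sum_over \<sigma> (A \<inter> C) f + Sum_over \<sigma> (A - C) f"
proof -
  have U: "A = (\<Union>b\<in>UNIV. if b then A \<inter> C else A - C)" by auto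
  have "Sum_over \<sigma> A f = Sum_over \<sigma> (\<Union>b\<in>UNIV. if b then A \<inter> C else A - C) f"
    using U by simp
  also have "\<dots> = Sum_over \<sigma> UNIV (\<lambda>b. Sum_over \<sigma> (if b then A \<inter> C else A - C) f)"
    by (rule SO_part) (use assms U in \<open>auto simp: small_bool\<close>)
  also have "\<dots> = Sum_over \<sigma> (A \<inter> C) f + Sum_over \<sigma> (A - C) f"
    by (simp add: SO_bool)
  finally show ?thesis .
qed

lemma SO_zero_outside:
  assumes "small A" "B \<subseteq> A" "\<And>x. x \<in> A \<Longrightarrow> x \<notin> B \<Longrightarrow> f x = 0"
  shows "Sum_over \<sigma> A f = Sum_over \<sigma> B f"
proof -
  have "Sum_over \<sigma> A f = Sum_over \<sigma> (A \<inter> B) f + Sum_over \<sigma> (A - B) f"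
    by (rule SO_split[OF assms(1)])
  also have "Sum_over \<sigma> (A - B) f = 0"
    using SO_cong[of "A - B" f "\<lambda>_. 0"] assms(3) by (simp add: SO_zero)
  also have "A \<inter> B = B" using assms(2) by auto
  finally show ?thesis by simp
qed

lemma SO_finite: "finite A \<Longrightarrow> Sum_over \<sigma> A f = sum f A"
proof (induction A rule: finite_induct)
  case empty then show ?case by (simp add: SO_empty)
next
  case (insert x F)
  have sm: "small (insert x F)" using insert by (intro small_countable) (simp add: countable_finite)
  have "Sum_over \<sigma> (insert x F) f = Sum_over \<sigma> (insert x F \<inter> {x}) f + Sum_over \<sigma> (insert x F - {x}) f"
    by (rule SO_split[OF sm])
  also have "insert x F \<inter> {x} = {x}" by auto
  also have "insert x F - {x} = F" using insert by auto
  finally show ?case using insert by (simp add: SO_single)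
qed

lemma SO_Sigma:
  assumes "small (Sigma A B)" "small A"
  shows "Sum_over \<sigma> (Sigma A B) f = Sum_over \<sigma> A (\<lambda>a. Sum_over \<sigma> (B a) (\<lambda>b. f (a, b)))"
proof -
  have U: "Sigma A B = (\<Union>a\<in>A. Pair a ` B a)" by auto
  have "Sum_over \<sigma> (Sigma A B) f = Sum_over \<sigma> A (\<lambda>a. Sum_over \<sigma> (Pair a ` B a) f)"
    unfolding U by (rule SO_part) (use assms U in auto)
  also have "\<dots> = Sum_over \<sigma> A (\<lambda>a. Sum_over \<sigma> (B a) (\<lambda>b. f (a, b)))"
  proof (rule SO_cong)
    fix a assume a: "a \<in> A"
    have s: "small (Pair a ` B a)" using assms(1) by (rule small_subset) (use a in auto)
    have s2: "small (B a)" using small_inj[OF s] by (simp add: inj_on_def)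
    show "Sum_over \<sigma> (Pair a ` B a) f = Sum_over \<sigma> (B a) (\<lambda>b. f (a, b))"
      by (rule SO_reindex[OF s2]) (simp add: inj_on_def)
  qed
  finally show ?thesis .
qed

lemma SO_swap:
  assumes "small (A \<times> B)"
  shows "Sum_over \<sigma> (A \<times> B) f = Sum_over \<sigma> (B \<times> A) (\<lambda>(b, a). f (a, b))"
proof -
  have e: "A \<times> B = prod.swap ` (B \<times> A)" by auto
  have s: "small (B \<times> A)" using small_inj[of prod.swap "B \<times> A"] assms e by simp
  show ?thesis unfolding e by (subst SO_reindex[OF s]) (auto intro: SO_cong)
qed

lemma SO_exchange:
  assumes "small A" "small B"
  shows "Sum_over \<sigma> A (\<lambda>a. Sum_over \<sigma> B (\<lambda>b. f a b)) = Sum_over \<sigma> B (\<lambda>b. Sum_over \<sigma> A (\<lambda>a. f a b))"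
proof -
  have sAB: "small (A \<times> B)" "small (B \<times> A)" using assms by (auto intro: small_prod)
  have "Sum_over \<sigma> A (\<lambda>a. Sum_over \<sigma> B (\<lambda>b. f a b)) = Sum_over \<sigma> (A \<times> B) (\<lambda>(a, b). f a b)"
    by (subst SO_Sigma) (use sAB assms in auto)
  also have "\<dots> = Sum_over \<sigma> (B \<times> A) (\<lambda>(b, a). f a b)"
    by (subst SO_swap[OF sAB(1)]) simp
  also have "\<dots> = Sum_over \<sigma> B (\<lambda>b. Sum_over \<sigma> A (\<lambda>a. f a b))"
    by (subst SO_Sigma) (use sAB assms in auto)
  finally show ?thesis .
qed

lemma SO_add:
  assumes "small A"
  shows "Sum_over \<sigma> A (\<lambda>x. f x + g x) = Sum_over \<sigma> A f + Sum_over \<sigma> A g"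
proof -
  let ?F = "\<lambda>(b::bool) x. if b then f x else g x"
  have "Sum_over \<sigma> A (\<lambda>x. f x + g x) = Sum_over \<sigma> A (\<lambda>x. Sum_over \<sigma> UNIV (\<lambda>b. ?F b x))"
    by (simp add: SO_bool)
  also have "\<dots> = Sum_over \<sigma> UNIV (\<lambda>b. Sum_over \<sigma> A (\<lambda>x. ?F b x))"
    by (rule SO_exchange) (use assms in \<open>auto simp: small_bool\<close>)
  also have "\<dots> = Sum_over \<sigma> A f + Sum_over \<sigma> A g" by (simp add: SO_bool)
  finally show ?thesis .
qed

lemma SO_sum:
  assumes "finite K" "small A"
  shows "Sum_over \<sigma> A (\<lambda>x. \<Sum>k\<in>K. f k x) = (\<Sum>k\<in>K. Sum_over \<sigma> A (f k))"
  using assms(1)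
proof (induction K rule: finite_induct)
  case empty then show ?case by (simp add: SO_zero)
next
  case (insert k K)
  then show ?case by (simp add: SO_add[OF assms(2)])
qed

lemma SO_reindex_bij:
  assumes "small A" "bij_betw g A B"
  shows "Sum_over \<sigma> B f = Sum_over \<sigma> A (\<lambda>x. f (g x))"
  using SO_reindex[OF assms(1), of g f] assms(2) by (simp add: bij_betw_def)

lemma SO_nat_shift:
  "Sum_over \<sigma> (UNIV::nat set) f = f 0 + Sum_over \<sigma> UNIV (\<lambda>m. f (Suc m))"
proof -
  have "Sum_over \<sigma> (UNIV::nat set) f = Sum_over \<sigma> (UNIV \<inter> {0}) f + Sum_over \<sigma> (UNIV - {0}) f"
    by (rule SO_split) (rule small_cnt)
  also have "UNIV - {0::nat} = Suc ` UNIV" by (auto simp: image_iff) (metis not0_implies_Suc)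
  also have "Sum_over \<sigma> (Suc ` UNIV) f = Sum_over \<sigma> UNIV (\<lambda>m. f (Suc m))"
    by (rule SO_reindex) (auto simp: small_cnt)
  finally show ?thesis by (simp add: SO_single)
qed

lemma SO_suffix:
  assumes "small B" "\<And>\<pi>. \<pi> \<in> B \<Longrightarrow> \<not> (\<exists>\<tau>. \<pi> = \<tau> @ \<sigma>') \<Longrightarrow> f \<pi> = 0"
  shows "Sum_over \<sigma> B f = Sum_over \<sigma> {\<tau>. \<tau> @ \<sigma>' \<in> B} (\<lambda>\<tau>. f (\<tau> @ \<sigma>'))"
proof -
  have sub: "(\<lambda>\<tau>. \<tau> @ \<sigma>') ` {\<tau>. \<tau> @ \<sigma>' \<in> B} \<subseteq> B" by auto
  have s2: "small {\<tau>. \<tau> @ \<sigma>' \<in> B}"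
    by (rule small_inj[of "\<lambda>\<tau>. \<tau> @ \<sigma>'"]) (auto intro: small_subset[OF assms(1) sub] simp: inj_on_def)
  have "Sum_over \<sigma> B f = Sum_over \<sigma> ((\<lambda>\<tau>. \<tau> @ \<sigma>') ` {\<tau>. \<tau> @ \<sigma>' \<in> B}) f"
    by (rule SO_zero_outside[OF assms(1) sub]) (use assms(2) in blast)
  also have "\<dots> = Sum_over \<sigma> {\<tau>. \<tau> @ \<sigma>' \<in> B} (\<lambda>\<tau>. f (\<tau> @ \<sigma>'))"
    by (rule SO_reindex[OF s2]) (simp add: inj_on_def)
  finally show ?thesis .
qed

end


locale pds = complete_ss_pair ssum vsum smult omega
  for ssum :: "idx set \<Rightarrow> (idx \<Rightarrow> 's::semiring_1) \<Rightarrow> 's"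
  and vsum :: "idx set \<Rightarrow> (idx \<Rightarrow> 'v::comm_monoid_add) \<Rightarrow> 'v"
  and smult :: "'s \<Rightarrow> 'v \<Rightarrow> 'v"
  and omega :: "(nat \<Rightarrow> 's) \<Rightarrow> 'v" +
  fixes n :: nat and M :: "('g::finite, 's) bmat"
  assumes pd: "pushdown_tm n M"
begin

abbreviation "SS \<equiv> Sum_over ssum"
abbreviation "VS \<equiv> Sum_over vsum"
abbreviation "mm \<equiv> bmat_mult ssum n"
abbreviation "P \<equiv> bmat_pow ssum n M"

lemmas S_cong = SO_cong[OF ssum_complete]
lemmas S_zero = SO_zero[OF ssum_complete]
lemmas S_single = SO_single[OF ssum_complete]
lemmas S_reindex = SO_reindex[OF ssum_complete]
lemmas S_part = SO_part[OF ssum_complete]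
lemmas S_split = SO_split[OF ssum_complete]
lemmas S_zero_outside = SO_zero_outside[OF ssum_complete]
lemmas S_finite = SO_finite[OF ssum_complete]
lemmas S_Sigma = SO_Sigma[OF ssum_complete]
lemmas S_exchange = SO_exchange[OF ssum_complete]
lemmas S_add = SO_add[OF ssum_complete]
lemmas S_sum = SO_sum[OF ssum_complete]
lemmas S_nat_shift = SO_nat_shift[OF ssum_complete]
lemmas S_suffix = SO_suffix[OF ssum_complete]
lemmas S_reindex_bij = SO_reindex_bij[OF ssum_complete]
lemmas V_cong = SO_cong[OF vsum_complete]
lemmas V_zero = SO_zero[OF vsum_complete]
lemmas V_single = SO_single[OF vsum_complete]
lemmas V_reindex = SO_reindex[OF vsum_complete]
lemmas V_part = SO_part[OF vsum_complete]
lemmas V_split = SO_split[OF vsum_complete]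
lemmas V_zero_outside = SO_zero_outside[OF vsum_complete]
lemmas V_finite = SO_finite[OF vsum_complete]
lemmas V_Sigma = SO_Sigma[OF vsum_complete]
lemmas V_exchange = SO_exchange[OF vsum_complete]
lemmas V_add = SO_add[OF vsum_complete]
lemmas V_sum = SO_sum[OF vsum_complete]
lemmas V_nat_shift = SO_nat_shift[OF vsum_complete]
lemmas V_suffix = SO_suffix[OF vsum_complete]
lemmas V_reindex_bij = SO_reindex_bij[OF vsum_complete]
lemmas V_empty = SO_empty[OF vsum_complete]

lemma SS_mult_left: "a * SS A f = SS A (\<lambda>x. a * f x)"
  unfolding Sum_over_def Let_def by (simp add: ssum_distl)
lemma SS_mult_right: "SS A f * a = SS A (\<lambda>x. f x * a)"
  unfolding Sum_over_def Let_def by (simp add: ssum_distr)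
lemma smult_VS: "smult s (VS A f) = VS A (\<lambda>x. smult s (f x))"
  unfolding Sum_over_def Let_def by (simp add: smult_vsum)
lemma smult_SS: "smult (SS A f) v = VS A (\<lambda>x. smult (f x) v)"
  unfolding Sum_over_def Let_def by (simp add: smult_ssum)
lemma smult_sum_left: "smult (\<Sum>k\<in>K. f k) v = (\<Sum>k\<in>K. smult (f k) v)"
  by (induction K rule: infinite_finite_induct) (auto simp: smult_zero_left smult_add_left)
lemma smult_sum_right: "smult s (\<Sum>k\<in>K. f k) = (\<Sum>k\<in>K. smult s (f k))"
  by (induction K rule: infinite_finite_induct) (auto simp: smult_zero_right smult_add_right)

lemma small_lists: "small (A :: 'g list set)" by (rule small_cnt)

lemma M_nil: "i < n \<Longrightarrow> j < n \<Longrightarrow> M [] \<pi> i j = 0"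
  using pd unfolding pushdown_tm_def by auto

lemma M_cons: "i < n \<Longrightarrow> j < n \<Longrightarrow> M (p # \<pi>') (c @ \<pi>') i j = M [p] c i j"
  using pd unfolding pushdown_tm_def by blast

lemma M_cons0: "i < n \<Longrightarrow> j < n \<Longrightarrow> \<not> (\<exists>c. \<tau> = c @ \<pi>') \<Longrightarrow> M (p # \<pi>') \<tau> i j = 0"
  using pd unfolding pushdown_tm_def by blast

lemma M_lift:
  assumes "\<rho> \<noteq> []" "i < n" "j < n"
  shows "M (\<rho> @ \<sigma>) (\<tau> @ \<sigma>) i j = M \<rho> \<tau> i j"
proof -
  obtain p \<rho>' where r: "\<rho> = p # \<rho>'" using assms(1) by (cases \<rho>) auto
  show ?thesis
  proof (cases "\<exists>c. \<tau> = c @ \<rho>'")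
    case True
    then obtain c where c: "\<tau> = c @ \<rho>'" by blast
    have "M (p # (\<rho>' @ \<sigma>)) (c @ (\<rho>' @ \<sigma>)) i j = M [p] c i j" by (rule M_cons[OF assms(2,3)])
    moreover have "M (p # \<rho>') (c @ \<rho>') i j = M [p] c i j" by (rule M_cons[OF assms(2,3)])
    ultimately show ?thesis by (simp add: r c)
  next
    case False
    have "M (p # \<rho>') \<tau> i j = 0" by (rule M_cons0[OF assms(2,3) False])
    moreover have "M (p # (\<rho>' @ \<sigma>)) (\<tau> @ \<sigma>) i j = 0"
      by (rule M_cons0[OF assms(2,3)]) (use False in auto)
    ultimately show ?thesis by (simp add: r)
  qed
qed

lemma M_lift0:
  assumes "\<rho> \<noteq> []" "i < n" "j < n" "\<not> (\<exists>\<tau>. \<pi> = \<tau> @ \<sigma>)"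
  shows "M (\<rho> @ \<sigma>) \<pi> i j = 0"
proof -
  obtain p \<rho>' where r: "\<rho> = p # \<rho>'" using assms(1) by (cases \<rho>) auto
  show ?thesis unfolding r
    by (simp, rule M_cons0[OF assms(2,3)]) (use assms(4) in force)
qed

lemma mm_eval: "mm A B \<pi>1 \<pi>2 i j = SS UNIV (\<lambda>\<pi>. \<Sum>k<n. A \<pi>1 \<pi> i k * B \<pi> \<pi>2 k j)"
  unfolding bmat_mult_def by simp

lemma mm_assoc: "mm (mm A B) C = mm A (mm B (C::('g,'s) bmat))"
proof (intro ext)
  fix \<pi>1 \<pi>2 i j
  have "mm (mm A B) C \<pi>1 \<pi>2 i j
      = SS UNIV (\<lambda>\<rho>. \<Sum>k<n. SS UNIV (\<lambda>\<pi>. \<Sum>k'<n. A \<pi>1 \<pi> i k' * B \<pi> \<rho> k' k * C \<rho> \<pi>2 k j))"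
    by (simp add: mm_eval SS_mult_right sum_distrib_right)
  also have "\<dots> = SS UNIV (\<lambda>\<rho>. SS UNIV (\<lambda>\<pi>. \<Sum>k<n. \<Sum>k'<n. A \<pi>1 \<pi> i k' * B \<pi> \<rho> k' k * C \<rho> \<pi>2 k j))"
    by (intro S_cong S_sum[where K="{..<n}" and A=UNIV, symmetric]) (simp_all add: small_lists)
  also have "\<dots> = SS UNIV (\<lambda>\<pi>. SS UNIV (\<lambda>\<rho>. \<Sum>k<n. \<Sum>k'<n. A \<pi>1 \<pi> i k' * B \<pi> \<rho> k' k * C \<rho> \<pi>2 k j))"
    by (rule S_exchange) (simp_all add: small_lists)
  also have "\<dots> = SS UNIV (\<lambda>\<pi>. \<Sum>k'<n. SS UNIV (\<lambda>\<rho>. \<Sum>k<n. A \<pi>1 \<pi> i k' * (B \<pi> \<rho> k' k * C \<rho> \<pi>2 k j)))"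
  proof (rule S_cong)
    fix \<pi>
    have "SS UNIV (\<lambda>\<rho>. \<Sum>k<n. \<Sum>k'<n. A \<pi>1 \<pi> i k' * B \<pi> \<rho> k' k * C \<rho> \<pi>2 k j)
        = SS UNIV (\<lambda>\<rho>. \<Sum>k'<n. \<Sum>k<n. A \<pi>1 \<pi> i k' * (B \<pi> \<rho> k' k * C \<rho> \<pi>2 k j))"
      by (rule S_cong) (subst sum.swap, simp add: mult.assoc)
    also have "\<dots> = (\<Sum>k'<n. SS UNIV (\<lambda>\<rho>. \<Sum>k<n. A \<pi>1 \<pi> i k' * (B \<pi> \<rho> k' k * C \<rho> \<pi>2 k j)))"
      by (rule S_sum) (simp_all add: small_lists)
    finally show "SS UNIV (\<lambda>\<rho>. \<Sum>k<n. \<Sum>k'<n. A \<pi>1 \<pi> i k' * B \<pi> \<rho> k' k * C \<rho> \<pi>2 k j)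
        = (\<Sum>k'<n. SS UNIV (\<lambda>\<rho>. \<Sum>k<n. A \<pi>1 \<pi> i k' * (B \<pi> \<rho> k' k * C \<rho> \<pi>2 k j)))" .
  qed
  also have "\<dots> = mm A (mm B C) \<pi>1 \<pi>2 i j"
    by (simp add: mm_eval SS_mult_left sum_distrib_left)
  finally show "mm (mm A B) C \<pi>1 \<pi>2 i j = mm A (mm B C) \<pi>1 \<pi>2 i j" .
qed

lemma sum_delta: "i < n \<Longrightarrow> (\<Sum>k<n. (if i = k then 1 else 0) * (f k::'s)) = f i"
proof -
  assume "i < n"
  have "(\<Sum>k<n. (if i = k then 1 else 0) * (f k::'s)) = (\<Sum>k<n. if i = k then f k else 0)"
    by (rule sum.cong) auto
  then show ?thesis using \<open>i < n\<close> by simp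
qed

lemma sum_delta': "j < n \<Longrightarrow> (\<Sum>k<n. (f k::'s) * (if k = j then 1 else 0)) = f j"
proof -
  assume "j < n"
  have "(\<Sum>k<n. (f k::'s) * (if k = j then 1 else 0)) = (\<Sum>k<n. if k = j then f k else 0)"
    by (rule sum.cong) auto
  then show ?thesis using \<open>j < n\<close> by simp
qed

lemma one_left: "i < n \<Longrightarrow> mm bmat_one (A::('g,'s) bmat) \<pi>1 \<pi>2 i j = A \<pi>1 \<pi>2 i j"
proof -
  assume i: "i < n"
  have "mm bmat_one A \<pi>1 \<pi>2 i j = SS {\<pi>1} (\<lambda>\<pi>. \<Sum>k<n. bmat_one \<pi>1 \<pi> i k * A \<pi> \<pi>2 k j)"
    unfolding mm_eval by (rule S_zero_outside) (auto simp: small_lists bmat_one_def)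
  also have "\<dots> = A \<pi>1 \<pi>2 i j" using i by (simp add: S_single bmat_one_def sum_delta)
  finally show ?thesis .
qed

lemma one_right: "j < n \<Longrightarrow> mm (A::('g,'s) bmat) bmat_one \<pi>1 \<pi>2 i j = A \<pi>1 \<pi>2 i j"
proof -
  assume j: "j < n"
  have "mm A bmat_one \<pi>1 \<pi>2 i j = SS {\<pi>2} (\<lambda>\<pi>. \<Sum>k<n. A \<pi>1 \<pi> i k * bmat_one \<pi> \<pi>2 k j)"
    unfolding mm_eval by (rule S_zero_outside) (auto simp: small_lists bmat_one_def)
  also have "\<dots> = A \<pi>1 \<pi>2 i j" using j by (simp add: S_single bmat_one_def sum_delta')
  finally show ?thesis .
qed

lemma mm_cong_left:
  assumes "i < n" "\<And>\<pi> k. k < n \<Longrightarrow> A \<pi>1 \<pi> i k = A' \<pi>1 \<pi> i k"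
  shows "mm A (B::('g,'s) bmat) \<pi>1 \<pi>2 i j = mm A' B \<pi>1 \<pi>2 i j"
  unfolding mm_eval using assms(2) by (intro S_cong sum.cong) auto

lemma P_Suc_left: "i < n \<Longrightarrow> j < n \<Longrightarrow> P (Suc m) \<pi>1 \<pi>2 i j = mm M (P m) \<pi>1 \<pi>2 i j"
proof (induction m arbitrary: \<pi>1 \<pi>2 i j)
  case 0
  then show ?case by (simp add: one_left one_right)
next
  case (Suc m)
  have "P (Suc (Suc m)) \<pi>1 \<pi>2 i j = mm (P (Suc m)) M \<pi>1 \<pi>2 i j" by simp
  also have "\<dots> = mm (mm M (P m)) M \<pi>1 \<pi>2 i j"
    by (rule mm_cong_left) (use Suc in auto)
  also have "\<dots> = mm M (P (Suc m)) \<pi>1 \<pi>2 i j" by (simp add: mm_assoc)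
  finally show ?case .
qed

end


context pds begin

declare bmat_pow.simps[simp del]

abbreviation "T \<equiv> bmat_star ssum n M"

lemma T_eval: "T \<sigma> \<tau> i j = SS UNIV (\<lambda>m. P m \<sigma> \<tau> i j)"
  unfolding bmat_star_def by simp

lemma small_nat: "small (A :: nat set)" by (rule small_cnt)

lemma P0: "P 0 \<sigma> \<tau> i j = (if \<sigma> = \<tau> \<and> i = j then 1 else 0)"
  by (simp add: bmat_one_def bmat_pow.simps)

lemma block:
  assumes "\<rho> \<noteq> []" "i < n"
  shows "SS UNIV (\<lambda>\<pi>. \<Sum>k<n. M (\<rho> @ \<sigma>) \<pi> i k * g \<pi> k) = SS UNIV (\<lambda>\<tau>. \<Sum>k<n. M \<rho> \<tau> i k * g (\<tau> @ \<sigma>) k)"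
proof -
  have "SS UNIV (\<lambda>\<pi>. \<Sum>k<n. M (\<rho> @ \<sigma>) \<pi> i k * g \<pi> k)
      = SS {\<tau>. \<tau> @ \<sigma> \<in> UNIV} (\<lambda>\<tau>. \<Sum>k<n. M (\<rho> @ \<sigma>) (\<tau> @ \<sigma>) i k * g (\<tau> @ \<sigma>) k)"
    by (rule S_suffix) (auto simp: small_lists M_lift0[OF assms(1,2)])
  also have "\<dots> = SS UNIV (\<lambda>\<tau>. \<Sum>k<n. M \<rho> \<tau> i k * g (\<tau> @ \<sigma>) k)"
    by (auto intro!: S_cong sum.cong simp: M_lift[OF assms(1,2)])
  finally show ?thesis .
qed

lemma P_nil: "i < n \<Longrightarrow> j < n \<Longrightarrow> P (Suc a) [] \<tau> i j = 0"
  by (simp add: P_Suc_left mm_eval M_nil S_zero)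

lemma rearr:
  assumes "finite A"
  shows "SS UNIV (\<lambda>\<tau>::'g list. \<Sum>k<n. c \<tau> k * (\<Sum>a\<in>A. \<Sum>k'<n. d \<tau> a k k' * e a k'))
       = (\<Sum>a\<in>A. \<Sum>k'<n. SS UNIV (\<lambda>\<tau>. \<Sum>k<n. c \<tau> k * d \<tau> a k k') * e a k')"
proof -
  have "SS UNIV (\<lambda>\<tau>::'g list. \<Sum>k<n. c \<tau> k * (\<Sum>a\<in>A. \<Sum>k'<n. d \<tau> a k k' * e a k'))
      = SS UNIV (\<lambda>\<tau>. \<Sum>a\<in>A. \<Sum>k'<n. \<Sum>k<n. c \<tau> k * d \<tau> a k k' * e a k')"
  proof (rule S_cong)
    fix \<tau>
    have "(\<Sum>k<n. c \<tau> k * (\<Sum>a\<in>A. \<Sum>k'<n. d \<tau> a k k' * e a k'))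
        = (\<Sum>k<n. \<Sum>a\<in>A. \<Sum>k'<n. c \<tau> k * d \<tau> a k k' * e a k')"
      by (simp add: sum_distrib_left mult.assoc)
    also have "\<dots> = (\<Sum>a\<in>A. \<Sum>k<n. \<Sum>k'<n. c \<tau> k * d \<tau> a k k' * e a k')"
      by (rule sum.swap)
    also have "\<dots> = (\<Sum>a\<in>A. \<Sum>k'<n. \<Sum>k<n. c \<tau> k * d \<tau> a k k' * e a k')"
      by (rule sum.cong[OF refl], rule sum.swap)
    finally show "(\<Sum>k<n. c \<tau> k * (\<Sum>a\<in>A. \<Sum>k'<n. d \<tau> a k k' * e a k'))
        = (\<Sum>a\<in>A. \<Sum>k'<n. \<Sum>k<n. c \<tau> k * d \<tau> a k k' * e a k')" .
  qed
  also have "\<dots> = (\<Sum>a\<in>A. SS UNIV (\<lambda>\<tau>. \<Sum>k'<n. \<Sum>k<n. c \<tau> k * d \<tau> a k k' * e a k'))"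
    by (rule S_sum) (simp_all add: assms small_lists)
  also have "\<dots> = (\<Sum>a\<in>A. \<Sum>k'<n. SS UNIV (\<lambda>\<tau>. \<Sum>k<n. c \<tau> k * d \<tau> a k k' * e a k'))"
    by (rule sum.cong[OF refl], rule S_sum) (simp_all add: small_lists)
  also have "\<dots> = (\<Sum>a\<in>A. \<Sum>k'<n. SS UNIV (\<lambda>\<tau>. \<Sum>k<n. c \<tau> k * d \<tau> a k k') * e a k')"
    by (simp add: SS_mult_right sum_distrib_right)
  finally show ?thesis .
qed

lemma L:
  "i < n \<Longrightarrow> j < n \<Longrightarrow> P m (\<sigma> @ \<pi>') [] i j = (\<Sum>a\<le>m. \<Sum>k<n. P a \<sigma> [] i k * P (m - a) \<pi>' [] k j)"
proof (induction m arbitrary: \<sigma> i j)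
  case 0
  show ?case
  proof (cases "\<sigma> = []")
    case True
    have "(\<Sum>k<n. P 0 \<sigma> [] i k * P 0 \<pi>' [] k j) = (\<Sum>k<n. (if i = k then 1 else 0) * P 0 \<pi>' [] k j)"
      using True by (intro sum.cong) (simp_all add: P0)
    also have "\<dots> = P 0 \<pi>' [] i j" using 0 by (intro sum_delta) auto
    finally show ?thesis using True by simp
  next
    case False
    then show ?thesis by (simp add: P0)
  qed
next
  case (Suc m)
  show ?case
  proof (cases \<sigma>)
    case Nil
    have "(\<Sum>a\<le>Suc m. \<Sum>k<n. P a \<sigma> [] i k * P (Suc m - a) \<pi>' [] k j)
        = (\<Sum>k<n. P 0 [] [] i k * P (Suc m) \<pi>' [] k j) + (\<Sum>a\<le>m. \<Sum>k<n. P (Suc a) [] [] i k * P (m - a) \<pi>' [] k j)"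
      by (simp only: sum.atMost_Suc_shift Nil) simp
    also have "(\<Sum>a\<le>m. \<Sum>k<n. P (Suc a) [] [] i k * P (m - a) \<pi>' [] k j) = 0"
      using Suc.prems by (simp add: P_nil)
    also have "(\<Sum>k<n. P 0 [] [] i k * P (Suc m) \<pi>' [] k j) = P (Suc m) \<pi>' [] i j"
    proof -
      have "(\<Sum>k<n. P 0 [] [] i k * P (Suc m) \<pi>' [] k j) = (\<Sum>k<n. (if i = k then 1 else 0) * P (Suc m) \<pi>' [] k j)"
        by (intro sum.cong) (simp_all add: P0)
      also have "\<dots> = P (Suc m) \<pi>' [] i j" using Suc.prems by (intro sum_delta) auto
      finally show ?thesis .
    qed
    finally show ?thesis by (simp add: Nil)
  next
    case (Cons q \<sigma>')
    have "P (Suc m) (\<sigma> @ \<pi>') [] i j = mm M (P m) ([q] @ (\<sigma>' @ \<pi>')) [] i j"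
      using Suc.prems Cons by (simp add: P_Suc_left)
    also have "\<dots> = SS UNIV (\<lambda>\<tau>. \<Sum>k<n. M [q] \<tau> i k * P m (\<tau> @ \<sigma>' @ \<pi>') [] k j)"
      unfolding mm_eval by (rule block) (use Suc.prems in auto)
    also have "\<dots> = SS UNIV (\<lambda>\<tau>. \<Sum>k<n. M [q] \<tau> i k *
                      (\<Sum>a\<le>m. \<Sum>k'<n. P a (\<tau> @ \<sigma>') [] k k' * P (m - a) \<pi>' [] k' j))"
    proof (intro S_cong sum.cong refl arg_cong2[where f="(*)"])
      fix \<tau> k assume "k \<in> {..<n}"
      then show "P m (\<tau> @ \<sigma>' @ \<pi>') [] k j = (\<Sum>a\<le>m. \<Sum>k'<n. P a (\<tau> @ \<sigma>') [] k k' * P (m - a) \<pi>' [] k' j)"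
        using Suc.IH[of k j "\<tau> @ \<sigma>'"] Suc.prems by simp
    qed
    also have "\<dots> = (\<Sum>a\<le>m. \<Sum>k'<n. SS UNIV (\<lambda>\<tau>. \<Sum>k<n. M [q] \<tau> i k * P a (\<tau> @ \<sigma>') [] k k') * P (m - a) \<pi>' [] k' j)"
      by (rule rearr) simp
    also have "\<dots> = (\<Sum>a\<le>m. \<Sum>k'<n. P (Suc a) \<sigma> [] i k' * P (m - a) \<pi>' [] k' j)"
    proof (intro sum.cong refl arg_cong2[where f="(*)"])
      fix a k' assume k': "k' \<in> {..<n}"
      have "P (Suc a) \<sigma> [] i k' = mm M (P a) ([q] @ \<sigma>') [] i k'"
        using Suc.prems k' Cons by (simp add: P_Suc_left)
      also have "\<dots> = SS UNIV (\<lambda>\<tau>. \<Sum>k<n. M [q] \<tau> i k * P a (\<tau> @ \<sigma>') [] k k')"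
        unfolding mm_eval by (rule block) (use Suc.prems in auto)
      finally show "SS UNIV (\<lambda>\<tau>. \<Sum>k<n. M [q] \<tau> i k * P a (\<tau> @ \<sigma>') [] k k') = P (Suc a) \<sigma> [] i k'" by simp
    qed
    also have "\<dots> = (\<Sum>a\<le>Suc m. \<Sum>k<n. P a \<sigma> [] i k * P (Suc m - a) \<pi>' [] k j)"
      by (simp only: sum.atMost_Suc_shift) (simp add: P0 Cons)
    finally show ?thesis .
  qed
qed

lemma cauchy:
  "SS UNIV (\<lambda>m::nat. \<Sum>a\<le>m. f a (m - a)) = SS UNIV (\<lambda>a. SS UNIV (\<lambda>b. f a b))"
proof -
  have sS: "small (Sigma (UNIV::nat set) (\<lambda>m. {..m}))" by (rule small_cnt)
  have "SS UNIV (\<lambda>m::nat. \<Sum>a\<le>m. f a (m - a)) = SS UNIV (\<lambda>m::nat. SS {..m} (\<lambda>a. f a (m - a)))"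
    by (simp add: S_finite)
  also have "\<dots> = SS (Sigma UNIV (\<lambda>m. {..m})) (\<lambda>(m, a). f a (m - a))"
    by (subst S_Sigma) (simp_all add: small_cnt)
  also have "\<dots> = SS (UNIV \<times> UNIV) (\<lambda>(a, b). f a (a + b - a))"
  proof -
    have bij: "bij_betw (\<lambda>(a, b). (a + b, a)) (UNIV \<times> UNIV) (Sigma (UNIV::nat set) atMost)"
      unfolding bij_betw_def inj_on_def
      by (auto simp: image_iff) (metis add.commute le_add_diff_inverse)
    show ?thesis
      by (subst S_reindex_bij[OF small_cnt bij]) (auto intro: S_cong)
  qed
  also have "\<dots> = SS UNIV (\<lambda>a. SS UNIV (\<lambda>b. f a b))"
    by (subst S_Sigma) (simp_all add: small_cnt)
  finally show ?thesis .
qed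

lemma T_prod:
  assumes "i < n" "j < n"
  shows "T (\<sigma> @ \<pi>') [] i j = (\<Sum>k<n. T \<sigma> [] i k * T \<pi>' [] k j)"
proof -
  have "T (\<sigma> @ \<pi>') [] i j = SS UNIV (\<lambda>m. \<Sum>a\<le>m. \<Sum>k<n. P a \<sigma> [] i k * P (m - a) \<pi>' [] k j)"
    unfolding T_eval using L assms by simp
  also have "\<dots> = SS UNIV (\<lambda>a. SS UNIV (\<lambda>b. \<Sum>k<n. P a \<sigma> [] i k * P b \<pi>' [] k j))"
    by (rule cauchy)
  also have "\<dots> = SS UNIV (\<lambda>a. \<Sum>k<n. P a \<sigma> [] i k * T \<pi>' [] k j)"
    by (intro S_cong) (simp add: S_sum small_nat T_eval SS_mult_left)
  also have "\<dots> = (\<Sum>k<n. T \<sigma> [] i k * T \<pi>' [] k j)"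
    by (simp add: S_sum small_nat T_eval SS_mult_right)
  finally show ?thesis .
qed

lemma T_nil: "i < n \<Longrightarrow> j < n \<Longrightarrow> T [] [] i j = (if i = j then 1 else 0)"
  unfolding T_eval by (subst S_nat_shift) (simp add: P_nil S_zero P0)

lemma T_x:
  assumes "i < n" "j < n"
  shows "T [p] [] i j = SS UNIV (\<lambda>\<pi>. \<Sum>k<n. M [p] \<pi> i k * T \<pi> [] k j)"
proof -
  have "T [p] [] i j = SS UNIV (\<lambda>m. P (Suc m) [p] [] i j)"
    unfolding T_eval by (subst S_nat_shift) (simp add: P0)
  also have "\<dots> = SS UNIV (\<lambda>m. SS UNIV (\<lambda>\<pi>. \<Sum>k<n. M [p] \<pi> i k * P m \<pi> [] k j))"
    using assms by (simp add: P_Suc_left mm_eval)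
  also have "\<dots> = SS UNIV (\<lambda>\<pi>. SS UNIV (\<lambda>m. \<Sum>k<n. M [p] \<pi> i k * P m \<pi> [] k j))"
    by (rule S_exchange) (simp_all add: small_cnt)
  also have "\<dots> = SS UNIV (\<lambda>\<pi>. \<Sum>k<n. M [p] \<pi> i k * T \<pi> [] k j)"
    by (intro S_cong) (simp add: S_sum small_nat T_eval SS_mult_left)
  finally show ?thesis .
qed

lemma xw_T:
  assumes "i < n" "j < n"
  shows "mat_listprod n (map (\<lambda>p. T [p] []) \<pi>) i j = T \<pi> [] i j"
  using assms
proof (induction \<pi> arbitrary: i j)
  case Nil
  then show ?case by (simp add: mat_listprod_def mat_one_def T_nil)
next
  case (Cons p \<pi>)
  have "mat_listprod n (map (\<lambda>p. T [p] []) (p # \<pi>)) i j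
      = (\<Sum>k<n. T [p] [] i k * mat_listprod n (map (\<lambda>p. T [p] []) \<pi>) k j)"
    by (simp add: mat_listprod_def mat_mult_def)
  also have "\<dots> = (\<Sum>k<n. T [p] [] i k * T \<pi> [] k j)"
    using Cons by (intro sum.cong) auto
  also have "\<dots> = T ([p] @ \<pi>) [] i j" by (rule T_prod[symmetric]) (use Cons in auto)
  finally show ?case by simp
qed

end


context pds begin

definition W :: "'g list \<Rightarrow> nat \<Rightarrow> (nat \<Rightarrow> 'g list) \<Rightarrow> (nat \<Rightarrow> nat) \<Rightarrow> 'v" where
  "W \<alpha> i \<pi>s js = omega (\<lambda>t. M (case_nat \<alpha> \<pi>s t) (\<pi>s t) (case_nat i js t) (js t))"

definition OS :: "nat \<Rightarrow> ((nat \<Rightarrow> 'g list) \<times> (nat \<Rightarrow> nat)) set \<Rightarrow> 'g list \<Rightarrow> nat \<Rightarrow> 'v" where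
  "OS l Q \<alpha> i = VS {x \<in> Q. snd x \<in> Pl n l} (\<lambda>x. W \<alpha> i (fst x) (snd x))"

lemma small_pairs: "small (A :: ((nat \<Rightarrow> 'g list) \<times> (nat \<Rightarrow> nat)) set)"
  by (rule small_subset[OF small_prod[OF small_funs small_funs, of UNIV UNIV]]) auto

lemma W_cons: "W \<alpha> i (case_nat \<pi> a) (case_nat k b) = smult (M \<alpha> \<pi> i k) (W \<pi> k a b)"
  unfolding W_def by (subst omega_unfold) simp

lemma omega_zero: "s t = 0 \<Longrightarrow> omega s = 0"
proof (induction t arbitrary: s)
  case 0
  then show ?case by (subst omega_unfold) (simp add: smult_zero_left)
next
  case (Suc t)
  then show ?case by (subst omega_unfold) (simp add: smult_zero_right)
qed

lemma finite_Suc_image: "finite (Suc ` A) \<longleftrightarrow> finite A"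
  by (simp add: finite_image_iff)

lemma Pl_cons: "case_nat k js \<in> Pl n l \<longleftrightarrow> k < n \<and> js \<in> Pl n l"
proof -
  have a: "(\<forall>t. case_nat k js t < n) \<longleftrightarrow> k < n \<and> (\<forall>t. js t < n)"
  proof
    assume h: "\<forall>t. case_nat k js t < n"
    have "k < n" using h[rule_format, of 0] by simp
    moreover have "\<forall>t. js t < n" using h by (metis nat.case(2))
    ultimately show "k < n \<and> (\<forall>t. js t < n)" by blast
  next
    assume "k < n \<and> (\<forall>t. js t < n)"
    then show "\<forall>t. case_nat k js t < n" by (auto split: nat.splits)
  qed
  have e: "{t. case_nat k js t < l} = {t. t = 0 \<and> k < l} \<union> Suc ` {t. js t < l}"
  proof (intro set_eqI iffI)
    fix t assume "t \<in> {t. case_nat k js t < l}"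
    then show "t \<in> {t. t = 0 \<and> k < l} \<union> Suc ` {t. js t < l}"
      by (cases t) auto
  next
    fix t assume "t \<in> {t. t = 0 \<and> k < l} \<union> Suc ` {t. js t < l}"
    then show "t \<in> {t. case_nat k js t < l}" by auto
  qed
  have "finite {t. case_nat k js t < l} \<longleftrightarrow> finite {t. js t < l}"
    unfolding e by (simp add: finite_Suc_image)
  then show ?thesis using a unfolding Pl_def by auto
qed

lemma case_nat_eta: "case_nat (f 0) (\<lambda>t. f (Suc t)) = f"
  by (rule ext) (simp split: nat.splits)

lemma UQ:
  "OS l Q \<alpha> i = VS UNIV (\<lambda>\<pi>. \<Sum>k<n. smult (M \<alpha> \<pi> i k)
        (OS l {x. (case_nat \<pi> (fst x), case_nat k (snd x)) \<in> Q} \<pi> k))"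
proof -
  define cons where "cons = (\<lambda>(y::'g list \<times> nat) (x::(nat \<Rightarrow> 'g list) \<times> (nat \<Rightarrow> nat)).
     (case_nat (fst y) (fst x), case_nat (snd y) (snd x)))"
  define D where "D = {x \<in> Q. snd x \<in> Pl n l}"
  define D' where "D' = (\<lambda>y. {x \<in> {x. cons y x \<in> Q}. snd x \<in> Pl n l})"
  have cons_eq: "cons y x = cons y' x' \<longleftrightarrow> y = y' \<and> x = x'" for y y' x x'
  proof
    assume h: "cons y x = cons y' x'"
    have 1: "fst y = fst y'" "snd y = snd y'"
      using fun_cong[OF arg_cong[OF h, of fst], of 0] fun_cong[OF arg_cong[OF h, of snd], of 0]
      by (simp_all add: cons_def split_beta)
    have "fst x = fst x'"
      by (rule ext) (use fun_cong[OF arg_cong[OF h, of fst], of "Suc _"] in \<open>simp add: cons_def split_beta\<close>)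
    moreover have "snd x = snd x'"
      by (rule ext) (use fun_cong[OF arg_cong[OF h, of snd], of "Suc _"] in \<open>simp add: cons_def split_beta\<close>)
    ultimately show "y = y' \<and> x = x'" using 1 by (simp add: prod_eq_iff)
  qed simp
  have U: "D = (\<Union>y\<in>UNIV \<times> {..<n}. cons y ` D' y)"
  proof
    show "D \<subseteq> (\<Union>y\<in>UNIV \<times> {..<n}. cons y ` D' y)"
    proof
      fix x assume x: "x \<in> D"
      let ?y = "(fst x 0, snd x 0)"
      let ?x' = "(\<lambda>t. fst x (Suc t), \<lambda>t. snd x (Suc t))"
      have c: "cons ?y ?x' = x" by (simp add: cons_def case_nat_eta)
      have "snd x \<in> Pl n l" using x by (simp add: D_def)
      then have p: "case_nat (snd x 0) (\<lambda>t. snd x (Suc t)) \<in> Pl n l" by (simp add: case_nat_eta)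
      have "?x' \<in> D' ?y" using x c p by (auto simp: D'_def D_def Pl_cons)
      moreover have "?y \<in> UNIV \<times> {..<n}" using p by (simp add: Pl_cons)
      ultimately show "x \<in> (\<Union>y\<in>UNIV \<times> {..<n}. cons y ` D' y)" using c by force
    qed
  next
    show "(\<Union>y\<in>UNIV \<times> {..<n}. cons y ` D' y) \<subseteq> D"
      by (auto simp: D_def D'_def cons_def Pl_cons split_beta)
  qed
  have "OS l Q \<alpha> i = VS D (\<lambda>x. W \<alpha> i (fst x) (snd x))" by (simp add: OS_def D_def)
  also have "\<dots> = VS (UNIV \<times> {..<n}) (\<lambda>y. VS (cons y ` D' y) (\<lambda>x. W \<alpha> i (fst x) (snd x)))"
    unfolding U by (rule V_part) (auto simp: small_pairs small_cnt cons_eq)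
  also have "\<dots> = VS (UNIV \<times> {..<n}) (\<lambda>y. VS (D' y) (\<lambda>x. W \<alpha> i (fst (cons y x)) (snd (cons y x))))"
    by (intro V_cong V_reindex) (auto simp: small_pairs inj_on_def cons_eq)
  also have "\<dots> = VS (UNIV \<times> {..<n}) (\<lambda>y. smult (M \<alpha> (fst y) i (snd y)) (VS (D' y) (\<lambda>x. W (fst y) (snd y) (fst x) (snd x))))"
    by (intro V_cong) (simp add: cons_def W_cons smult_VS)
  also have "\<dots> = VS UNIV (\<lambda>\<pi>. VS {..<n} (\<lambda>k. smult (M \<alpha> \<pi> i k) (VS (D' (\<pi>, k)) (\<lambda>x. W \<pi> k (fst x) (snd x)))))"
    by (subst V_Sigma) (simp_all add: small_cnt)
  also have "\<dots> = VS UNIV (\<lambda>\<pi>. \<Sum>k<n. smult (M \<alpha> \<pi> i k)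
        (OS l {x. (case_nat \<pi> (fst x), case_nat k (snd x)) \<in> Q} \<pi> k))"
    by (simp add: V_finite OS_def D'_def cons_def)
  finally show ?thesis .
qed

end


context pds begin

definition Hit :: "'g list \<Rightarrow> nat \<Rightarrow> ((nat \<Rightarrow> 'g list) \<times> (nat \<Rightarrow> nat)) set" where
  "Hit \<beta> m = {x. fst x m = \<beta> \<and> (\<forall>t<m. fst x t \<noteq> \<beta>)}"
definition Never :: "'g list \<Rightarrow> ((nat \<Rightarrow> 'g list) \<times> (nat \<Rightarrow> nat)) set" where
  "Never \<beta> = {x. \<forall>t. fst x t \<noteq> \<beta>}"

lemma bmat_omega_OS: "bmat_omega vsum omega n l M \<alpha> = OS l UNIV \<alpha>"
proof (rule ext)
  fix i
  have e: "{x \<in> UNIV. snd x \<in> Pl n l} = UNIV \<times> Pl n l" by auto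
  show "bmat_omega vsum omega n l M \<alpha> i = OS l UNIV \<alpha> i"
    unfolding OS_def e by (subst V_Sigma) (simp_all add: small_pairs small_funs bmat_omega_def W_def)
qed

lemma OS_empty: "OS l {} \<alpha> i = 0"
  by (simp add: OS_def V_empty)

lemma VS_option: "VS (UNIV :: nat option set) g = g None + VS UNIV (\<lambda>m. g (Some m))"
proof -
  have "VS (UNIV :: nat option set) g = VS (UNIV \<inter> {None}) g + VS (UNIV - {None}) g"
    by (rule V_split) (rule small_cnt)
  also have "UNIV - {None} = Some ` (UNIV :: nat set)" by (auto simp: image_iff)
  also have "VS (Some ` (UNIV :: nat set)) g = VS UNIV (\<lambda>m. g (Some m))"
    by (rule V_reindex) (auto simp: small_cnt)
  finally show ?thesis by (simp add: V_single)
qed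

lemma OS_split_hit:
  "OS l UNIV \<alpha> i = VS UNIV (\<lambda>m. OS l (Hit \<beta> m) \<alpha> i) + OS l (Never \<beta>) \<alpha> i"
proof -
  define B where "B = (\<lambda>w. {x \<in> (case w of None \<Rightarrow> Never \<beta> | Some m \<Rightarrow> Hit \<beta> m). snd x \<in> Pl n l})"
  have U: "{x \<in> (UNIV::((nat \<Rightarrow> 'g list) \<times> (nat \<Rightarrow> nat)) set). snd x \<in> Pl n l} = (\<Union>w\<in>UNIV. B w)"
  proof (intro set_eqI iffI)
    fix x assume x: "x \<in> {x \<in> (UNIV::((nat \<Rightarrow> 'g list) \<times> (nat \<Rightarrow> nat)) set). snd x \<in> Pl n l}"
    show "x \<in> (\<Union>w\<in>UNIV. B w)"
    proof (cases "\<exists>t. fst x t = \<beta>")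
      case True
      define m where "m = (LEAST t. fst x t = \<beta>)"
      have "fst x m = \<beta>" unfolding m_def using True by (rule LeastI_ex)
      moreover have "\<forall>t<m. fst x t \<noteq> \<beta>" unfolding m_def using not_less_Least by blast
      ultimately have "x \<in> B (Some m)" using x by (simp add: B_def Hit_def)
      then show ?thesis by blast
    next
      case False
      then have "x \<in> B None" using x by (simp add: B_def Never_def)
      then show ?thesis by blast
    qed
  next
    fix x assume "x \<in> (\<Union>w\<in>UNIV. B w)"
    then show "x \<in> {x \<in> (UNIV::((nat \<Rightarrow> 'g list) \<times> (nat \<Rightarrow> nat)) set). snd x \<in> Pl n l}" by (auto simp: B_def split: option.splits)
  qed
  have disj: "B w \<inter> B w' = {}" if "w \<noteq> w'" for w w'
  proof (cases w; cases w')
    fix m m' assume "w = Some m" "w' = Some m'"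
    then have "m \<noteq> m'" using that by simp
    then show ?thesis using \<open>w = Some m\<close> \<open>w' = Some m'\<close>
      by (auto simp: B_def Hit_def) (metis linorder_neqE_nat)
  qed (use that in \<open>auto simp: B_def Hit_def Never_def\<close>)
  have "OS l UNIV \<alpha> i = VS (\<Union>w\<in>UNIV. B w) (\<lambda>x. W \<alpha> i (fst x) (snd x))"
    unfolding OS_def U by simp
  also have "\<dots> = VS UNIV (\<lambda>w. VS (B w) (\<lambda>x. W \<alpha> i (fst x) (snd x)))"
    by (rule V_part) (auto simp: small_pairs small_cnt disj)
  also have "\<dots> = VS (B None) (\<lambda>x. W \<alpha> i (fst x) (snd x)) + VS UNIV (\<lambda>m. VS (B (Some m)) (\<lambda>x. W \<alpha> i (fst x) (snd x)))"
    by (rule VS_option)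
  finally show ?thesis by (simp add: B_def OS_def add.commute)
qed

lemma Hit0: "OS l (Hit \<beta> 0) \<alpha> i = (\<Sum>k<n. smult (M \<alpha> \<beta> i k) (OS l UNIV \<beta> k))"
proof -
  have e: "{x. (case_nat \<pi> (fst x), case_nat k (snd x)) \<in> Hit \<beta> 0} = (if \<pi> = \<beta> then UNIV else {})" for \<pi> k
    by (auto simp: Hit_def)
  have "OS l (Hit \<beta> 0) \<alpha> i = VS UNIV (\<lambda>\<pi>. \<Sum>k<n. smult (M \<alpha> \<pi> i k) (OS l (if \<pi> = \<beta> then UNIV else {}) \<pi> k))"
    by (subst UQ) (simp only: e)
  also have "\<dots> = VS {\<beta>} (\<lambda>\<pi>. \<Sum>k<n. smult (M \<alpha> \<pi> i k) (OS l (if \<pi> = \<beta> then UNIV else {}) \<pi> k))"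
    by (rule V_zero_outside) (auto simp: small_lists OS_empty smult_zero_right)
  finally show ?thesis by (simp add: V_single)
qed

lemma HitSuc: "OS l (Hit \<beta> (Suc m)) \<alpha> i = VS {\<pi>. \<pi> \<noteq> \<beta>} (\<lambda>\<pi>. \<Sum>k<n. smult (M \<alpha> \<pi> i k) (OS l (Hit \<beta> m) \<pi> k))"
proof -
  have e: "{x. (case_nat \<pi> (fst x), case_nat k (snd x)) \<in> Hit \<beta> (Suc m)} = (if \<pi> = \<beta> then {} else Hit \<beta> m)" for \<pi> k
  proof (cases "\<pi> = \<beta>")
    case True then show ?thesis by (auto simp: Hit_def)
  next
    case False
    have "(\<forall>t<Suc m. case_nat \<pi> a t \<noteq> \<beta>) \<longleftrightarrow> (\<forall>t<m. a t \<noteq> \<beta>)" for a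
    proof
      assume "\<forall>t<Suc m. case_nat \<pi> a t \<noteq> \<beta>"
      then show "\<forall>t<m. a t \<noteq> \<beta>" by (metis Suc_mono nat.case(2))
    next
      assume h: "\<forall>t<m. a t \<noteq> \<beta>"
      show "\<forall>t<Suc m. case_nat \<pi> a t \<noteq> \<beta>"
      proof (intro allI impI)
        fix t assume "t < Suc m" then show "case_nat \<pi> a t \<noteq> \<beta>" using h False by (cases t) auto
      qed
    qed
    then show ?thesis using False by (auto simp: Hit_def)
  qed
  have "OS l (Hit \<beta> (Suc m)) \<alpha> i = VS UNIV (\<lambda>\<pi>. \<Sum>k<n. smult (M \<alpha> \<pi> i k) (OS l (if \<pi> = \<beta> then {} else Hit \<beta> m) \<pi> k))"
    by (subst UQ) (simp only: e)
  also have "\<dots> = VS {\<pi>. \<pi> \<noteq> \<beta>} (\<lambda>\<pi>. \<Sum>k<n. smult (M \<alpha> \<pi> i k) (OS l (if \<pi> = \<beta> then {} else Hit \<beta> m) \<pi> k))"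
    by (rule V_zero_outside) (auto simp: small_lists OS_empty smult_zero_right)
  also have "\<dots> = VS {\<pi>. \<pi> \<noteq> \<beta>} (\<lambda>\<pi>. \<Sum>k<n. smult (M \<alpha> \<pi> i k) (OS l (Hit \<beta> m) \<pi> k))"
    by (rule V_cong) simp
  finally show ?thesis .
qed

lemma vrearr:
  "VS UNIV (\<lambda>\<tau>::'g list. \<Sum>k<n. smult (c \<tau> k) (\<Sum>k'<n. smult (d \<tau> k k') (v k')))
   = (\<Sum>k'<n. smult (SS UNIV (\<lambda>\<tau>. \<Sum>k<n. c \<tau> k * d \<tau> k k')) (v k'))"
proof -
  have "VS UNIV (\<lambda>\<tau>::'g list. \<Sum>k<n. smult (c \<tau> k) (\<Sum>k'<n. smult (d \<tau> k k') (v k')))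
      = VS UNIV (\<lambda>\<tau>. \<Sum>k'<n. \<Sum>k<n. smult (c \<tau> k * d \<tau> k k') (v k'))"
  proof (rule V_cong)
    fix \<tau>
    have "(\<Sum>k<n. smult (c \<tau> k) (\<Sum>k'<n. smult (d \<tau> k k') (v k')))
        = (\<Sum>k<n. \<Sum>k'<n. smult (c \<tau> k * d \<tau> k k') (v k'))"
      by (simp add: smult_sum_right smult_assoc)
    also have "\<dots> = (\<Sum>k'<n. \<Sum>k<n. smult (c \<tau> k * d \<tau> k k') (v k'))" by (rule sum.swap)
    finally show "(\<Sum>k<n. smult (c \<tau> k) (\<Sum>k'<n. smult (d \<tau> k k') (v k')))
        = (\<Sum>k'<n. \<Sum>k<n. smult (c \<tau> k * d \<tau> k k') (v k'))" .
  qed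
  also have "\<dots> = (\<Sum>k'<n. VS UNIV (\<lambda>\<tau>. \<Sum>k<n. smult (c \<tau> k * d \<tau> k k') (v k')))"
    by (rule V_sum) (simp_all add: small_lists)
  also have "\<dots> = (\<Sum>k'<n. smult (SS UNIV (\<lambda>\<tau>. \<Sum>k<n. c \<tau> k * d \<tau> k k')) (v k'))"
    by (simp add: smult_SS smult_sum_left)
  finally show ?thesis .
qed

lemma H:
  "\<rho> \<noteq> [] \<Longrightarrow> i < n \<Longrightarrow>
   OS l (Hit \<sigma> m) (\<rho> @ \<sigma>) i = (\<Sum>k'<n. smult (P (Suc m) \<rho> [] i k') (OS l UNIV \<sigma> k'))"
proof (induction m arbitrary: \<rho> i)
  case 0
  show ?case unfolding Hit0
  proof (intro sum.cong refl arg_cong2[where f=smult])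
    fix k assume k: "k \<in> {..<n}"
    have "M (\<rho> @ \<sigma>) ([] @ \<sigma>) i k = M \<rho> [] i k" using 0 k by (intro M_lift) auto
    also have "\<dots> = mm M (P 0) \<rho> [] i k" using k by (simp add: bmat_pow.simps one_right)
    also have "\<dots> = P (Suc 0) \<rho> [] i k" using 0 k by (simp add: P_Suc_left)
    finally show "M (\<rho> @ \<sigma>) \<sigma> i k = P (Suc 0) \<rho> [] i k" by simp
  qed
next
  case (Suc m)
  have "OS l (Hit \<sigma> (Suc m)) (\<rho> @ \<sigma>) i
      = VS {\<tau>. \<tau> @ \<sigma> \<in> {\<pi>. \<pi> \<noteq> \<sigma>}} (\<lambda>\<tau>. \<Sum>k<n. smult (M (\<rho> @ \<sigma>) (\<tau> @ \<sigma>) i k) (OS l (Hit \<sigma> m) (\<tau> @ \<sigma>) k))"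
    unfolding HitSuc
    by (rule V_suffix) (auto simp: small_lists M_lift0[OF Suc.prems] smult_zero_left)
  also have "\<dots> = VS {\<tau>. \<tau> \<noteq> []} (\<lambda>\<tau>. \<Sum>k<n. smult (M \<rho> \<tau> i k) (\<Sum>k'<n. smult (P (Suc m) \<tau> [] k k') (OS l UNIV \<sigma> k')))"
    by (auto intro!: V_cong sum.cong simp: M_lift[OF Suc.prems] Suc.IH)
  also have "\<dots> = VS UNIV (\<lambda>\<tau>. \<Sum>k<n. smult (M \<rho> \<tau> i k) (\<Sum>k'<n. smult (P (Suc m) \<tau> [] k k') (OS l UNIV \<sigma> k')))"
    by (rule V_zero_outside[symmetric]) (auto simp: small_lists P_nil smult_zero_left smult_zero_right)
  also have "\<dots> = (\<Sum>k'<n. smult (SS UNIV (\<lambda>\<tau>. \<Sum>k<n. M \<rho> \<tau> i k * P (Suc m) \<tau> [] k k')) (OS l UNIV \<sigma> k'))"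
    by (rule vrearr)
  also have "\<dots> = (\<Sum>k'<n. smult (P (Suc (Suc m)) \<rho> [] i k') (OS l UNIV \<sigma> k'))"
    using Suc.prems by (intro sum.cong refl) (simp add: P_Suc_left[of i] mm_eval)
  finally show ?case .
qed

end


context pds begin

lemma Never_lemma:
  assumes i: "i < n"
  shows "OS l (Never \<sigma>) (q # \<sigma>) i = OS l UNIV [q] i"
proof -
  define lift where "lift = (\<lambda>x::(nat \<Rightarrow> 'g list) \<times> (nat \<Rightarrow> nat). (\<lambda>t. fst x t @ \<sigma>, snd x))"
  define Good where "Good = {x::(nat \<Rightarrow> 'g list) \<times> (nat \<Rightarrow> nat). \<forall>t. fst x t \<noteq> []}"
  have Pln: "snd x \<in> Pl n l \<Longrightarrow> snd x t < n" for x t by (simp add: Pl_def)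
  have inj: "inj_on lift A" for A
    unfolding inj_on_def lift_def by (auto simp: fun_eq_iff prod_eq_iff)
  have s1: "OS l UNIV [q] i = OS l Good [q] i"
    unfolding OS_def
  proof (rule V_zero_outside)
    fix x assume x: "x \<in> {x \<in> UNIV. snd x \<in> Pl n l}" "x \<notin> {x \<in> Good. snd x \<in> Pl n l}"
    then obtain t where t: "fst x t = []" by (auto simp: Good_def)
    show "W [q] i (fst x) (snd x) = 0"
    proof -
      have "snd x t < n" "snd x (Suc t) < n" using x Pln by auto
      then show ?thesis unfolding W_def by (intro omega_zero[of _ "Suc t"]) (simp add: t M_nil)
    qed
  qed (auto simp: small_pairs)
  have s2: "OS l Good [q] i = OS l (lift ` Good) (q # \<sigma>) i"
  proof -
    have e: "{y \<in> lift ` Good. snd y \<in> Pl n l} = lift ` {x \<in> Good. snd x \<in> Pl n l}"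
      by (auto simp: lift_def)
    have "OS l (lift ` Good) (q # \<sigma>) i = VS {x \<in> Good. snd x \<in> Pl n l} (\<lambda>x. W (q # \<sigma>) i (fst (lift x)) (snd (lift x)))"
      unfolding OS_def e by (rule V_reindex) (simp_all add: small_pairs inj)
    also have "\<dots> = OS l Good [q] i"
      unfolding OS_def
    proof (rule V_cong)
      fix x assume x: "x \<in> {x \<in> Good. snd x \<in> Pl n l}"
      have "(\<lambda>t. M (case_nat (q # \<sigma>) (\<lambda>t. fst x t @ \<sigma>) t) (fst x t @ \<sigma>) (case_nat i (snd x) t) (snd x t))
          = (\<lambda>t. M (case_nat [q] (fst x) t) (fst x t) (case_nat i (snd x) t) (snd x t))"
      proof
        fix t show "M (case_nat (q # \<sigma>) (\<lambda>t. fst x t @ \<sigma>) t) (fst x t @ \<sigma>) (case_nat i (snd x) t) (snd x t)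
          = M (case_nat [q] (fst x) t) (fst x t) (case_nat i (snd x) t) (snd x t)"
        proof (cases t)
          case 0
          have "snd x 0 < n" using x Pln by auto
          then show ?thesis using M_lift[of "[q]" i "snd x 0" \<sigma> "fst x 0"] i 0 by simp
        next
          case (Suc t')
          have "fst x t' \<noteq> []" using x by (simp add: Good_def)
          moreover have "snd x t' < n" "snd x t < n" using x Pln by auto
          ultimately show ?thesis using M_lift[of "fst x t'" "snd x t'" "snd x t" \<sigma> "fst x t"] Suc by simp
        qed
      qed
      then show "W (q # \<sigma>) i (fst (lift x)) (snd (lift x)) = W [q] i (fst x) (snd x)"
        by (simp add: W_def lift_def)
    qed
    finally show ?thesis by simp
  qed
  have s3: "OS l (Never \<sigma>) (q # \<sigma>) i = OS l (lift ` Good) (q # \<sigma>) i"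
    unfolding OS_def
  proof (rule V_zero_outside)
    show "{x \<in> lift ` Good. snd x \<in> Pl n l} \<subseteq> {x \<in> Never \<sigma>. snd x \<in> Pl n l}"
      by (auto simp: lift_def Good_def Never_def)
  next
    fix y assume y: "y \<in> {x \<in> Never \<sigma>. snd x \<in> Pl n l}" "y \<notin> {x \<in> lift ` Good. snd x \<in> Pl n l}"
    define good where "good = (\<lambda>t. \<exists>\<rho>. \<rho> \<noteq> [] \<and> fst y t = \<rho> @ \<sigma>)"
    have "\<exists>t. \<not> good t"
    proof (rule ccontr)
      assume "\<not> (\<exists>t. \<not> good t)"
      then have g: "\<And>t. good t" by blast
      define x where "x = (\<lambda>t. take (length (fst y t) - length \<sigma>) (fst y t), snd y)"
      have fx: "fst y t = fst x t @ \<sigma> \<and> fst x t \<noteq> []" for t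
        using g[of t] unfolding good_def x_def by auto
      have "lift x = y" unfolding lift_def using fx by (simp add: x_def prod_eq_iff fun_eq_iff)
      moreover have "x \<in> Good" using fx by (simp add: Good_def)
      ultimately show False using y by blast
    qed
    define t0 where "t0 = (LEAST t. \<not> good t)"
    have t0: "\<not> good t0" unfolding t0_def using \<open>\<exists>t. \<not> good t\<close> by (rule LeastI_ex)
    have less: "good t" if "t < t0" for t using not_less_Least[OF that[unfolded t0_def]] by blast
    obtain \<rho>' where r: "\<rho>' \<noteq> []" "case_nat (q # \<sigma>) (fst y) t0 = \<rho>' @ \<sigma>"
    proof (cases t0)
      case 0 then show ?thesis using that[of "[q]"] by simp
    next
      case (Suc t1)
      then obtain \<rho> where "\<rho> \<noteq> []" "fst y t1 = \<rho> @ \<sigma>" using less[of t1] unfolding good_def by auto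
      then show ?thesis using that[of \<rho>] Suc by simp
    qed
    have nt: "\<not> (\<exists>\<tau>. fst y t0 = \<tau> @ \<sigma>)"
    proof
      assume "\<exists>\<tau>. fst y t0 = \<tau> @ \<sigma>"
      then obtain \<tau> where \<tau>: "fst y t0 = \<tau> @ \<sigma>" by blast
      show False
      proof (cases "\<tau> = []")
        case True then show False using y \<tau> by (auto simp: Never_def)
      next
        case False then show False using t0 \<tau> unfolding good_def by blast
      qed
    qed
    have idx: "case_nat i (snd y) t0 < n" "snd y t0 < n" using i y Pln by (auto split: nat.splits)
    show "W (q # \<sigma>) i (fst y) (snd y) = 0"
      unfolding W_def by (rule omega_zero[of _ t0]) (simp add: r(2) M_lift0[OF r(1) idx nt])
  qed (auto simp: small_pairs)
  show ?thesis using s1 s2 s3 by simp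
qed

end


context pds begin

lemma Om_cons:
  assumes i: "i < n"
  shows "OS l UNIV (q # \<sigma>) i = OS l UNIV [q] i + (\<Sum>k'<n. smult (T [q] [] i k') (OS l UNIV \<sigma> k'))"
proof -
  have "OS l UNIV (q # \<sigma>) i = VS UNIV (\<lambda>m. OS l (Hit \<sigma> m) ([q] @ \<sigma>) i) + OS l (Never \<sigma>) (q # \<sigma>) i"
    using OS_split_hit[of l "q # \<sigma>" i \<sigma>] by simp
  also have "VS UNIV (\<lambda>m. OS l (Hit \<sigma> m) ([q] @ \<sigma>) i)
      = VS UNIV (\<lambda>m. \<Sum>k'<n. smult (P (Suc m) [q] [] i k') (OS l UNIV \<sigma> k'))"
    by (rule V_cong) (rule H, use i in auto)
  also have "\<dots> = (\<Sum>k'<n. VS UNIV (\<lambda>m. smult (P (Suc m) [q] [] i k') (OS l UNIV \<sigma> k')))"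
    by (rule V_sum) (simp_all add: small_cnt)
  also have "\<dots> = (\<Sum>k'<n. smult (T [q] [] i k') (OS l UNIV \<sigma> k'))"
  proof (intro sum.cong refl)
    fix k'
    have "T [q] [] i k' = SS UNIV (\<lambda>m. P (Suc m) [q] [] i k')"
      unfolding T_eval by (subst S_nat_shift) (simp add: P0)
    then show "VS UNIV (\<lambda>m. smult (P (Suc m) [q] [] i k') (OS l UNIV \<sigma> k')) = smult (T [q] [] i k') (OS l UNIV \<sigma> k')"
      by (simp add: smult_SS)
  qed
  also have "OS l (Never \<sigma>) (q # \<sigma>) i = OS l UNIV [q] i" by (rule Never_lemma[OF i])
  finally show ?thesis by (simp add: add.commute)
qed

lemma Om_nil: "i < n \<Longrightarrow> OS l UNIV [] i = 0"
  by (subst UQ) (simp add: M_nil smult_zero_left V_zero)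

lemma mv_one: "i < n \<Longrightarrow> mat_vec smult n (mat_one n) u i = u i"
proof -
  assume i: "i < n"
  have "mat_vec smult n (mat_one n) u i = (\<Sum>k<n. if i = k then u k else 0)"
    unfolding mat_vec_def mat_one_def by (intro sum.cong refl) (simp add: smult_one smult_zero_left)
  then show ?thesis using i by simp
qed

lemma mv_mult: "mat_vec smult n (mat_mult n A B) u i = (\<Sum>k'<n. smult (A i k') (mat_vec smult n B u k'))"
proof -
  have "mat_vec smult n (mat_mult n A B) u i = (\<Sum>k<n. \<Sum>k'<n. smult (A i k') (smult (B k' k) (u k)))"
    by (simp add: mat_vec_def mat_mult_def smult_sum_left smult_assoc)
  also have "\<dots> = (\<Sum>k'<n. \<Sum>k<n. smult (A i k') (smult (B k' k) (u k)))" by (rule sum.swap)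
  also have "\<dots> = (\<Sum>k'<n. smult (A i k') (mat_vec smult n B u k'))"
    by (simp add: mat_vec_def smult_sum_right)
  finally show ?thesis .
qed

lemma Om_list:
  "i < n \<Longrightarrow> OS l UNIV \<pi> i = (\<Sum>j<length \<pi>. mat_vec smult n (mat_listprod n (map (\<lambda>p. T [p] []) (take j \<pi>)))
                                (OS l UNIV [\<pi> ! j]) i)"
proof (induction \<pi> arbitrary: i)
  case Nil
  then show ?case by (simp add: Om_nil)
next
  case (Cons q \<sigma>)
  let ?xw = "\<lambda>\<rho>. mat_listprod n (map (\<lambda>p. T [p] []) \<rho>)"
  have "OS l UNIV (q # \<sigma>) i = OS l UNIV [q] i + (\<Sum>k'<n. smult (T [q] [] i k') (OS l UNIV \<sigma> k'))"
    by (rule Om_cons[OF Cons.prems])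
  also have "(\<Sum>k'<n. smult (T [q] [] i k') (OS l UNIV \<sigma> k'))
      = (\<Sum>k'<n. smult (T [q] [] i k') (\<Sum>j<length \<sigma>. mat_vec smult n (?xw (take j \<sigma>)) (OS l UNIV [\<sigma> ! j]) k'))"
    by (intro sum.cong refl) (simp add: Cons.IH)
  also have "\<dots> = (\<Sum>j<length \<sigma>. \<Sum>k'<n. smult (T [q] [] i k') (mat_vec smult n (?xw (take j \<sigma>)) (OS l UNIV [\<sigma> ! j]) k'))"
    by (simp add: smult_sum_right sum.swap[of _ "{..<n}"])
  also have "\<dots> = (\<Sum>j<length \<sigma>. mat_vec smult n (?xw (take (Suc j) (q # \<sigma>))) (OS l UNIV [(q # \<sigma>) ! Suc j]) i)"
    by (intro sum.cong refl) (simp add: mat_listprod_def mv_mult)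
  also have "OS l UNIV [q] i = mat_vec smult n (?xw (take 0 (q # \<sigma>))) (OS l UNIV [(q # \<sigma>) ! 0]) i"
    using Cons.prems by (simp add: mat_listprod_def mv_one)
  finally show ?case by (simp only: length_Cons sum.lessThan_Suc_shift)
qed

end

theorem corollary9:
  fixes ssum :: "idx set \<Rightarrow> (idx \<Rightarrow> 's::semiring_1) \<Rightarrow> 's"
    and vsum :: "idx set \<Rightarrow> (idx \<Rightarrow> 'v::comm_monoid_add) \<Rightarrow> 'v"
    and smult :: "'s \<Rightarrow> 'v \<Rightarrow> 'v"
    and omega :: "(nat \<Rightarrow> 's) \<Rightarrow> 'v"
    and S' :: "'s set"
    and n l :: nat
    and M :: "('g::finite, 's) bmat"
  assumes "complete_ss_pair ssum vsum smult omega"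
    and "0 \<in> S'" and "1 \<in> S'"
    and "1 \<le> n"
    and "\<forall>\<pi>1 \<pi>2 i j. i < n \<longrightarrow> j < n \<longrightarrow> M \<pi>1 \<pi>2 i j \<in> S'"
    and "pushdown_tm n M"
    and "l \<le> n"
  shows "let x = (\<lambda>p. bmat_star ssum n M [p] []);
             xw = (\<lambda>\<pi>. mat_listprod n (map x \<pi>));
             z = (\<lambda>p. bmat_omega vsum omega n l M [p])
         in \<forall>p.
              (\<forall>i<n. \<forall>j<n. x p i j = Sum_over ssum UNIV (\<lambda>\<pi>. mat_mult n (M [p] \<pi>) (xw \<pi>) i j)) \<and>
              (\<forall>i<n. z p i =
                 Sum_over vsum {\<pi>. \<pi> \<noteq> []} (\<lambda>\<pi>.
                   mat_vec smult n (M [p] \<pi>)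
                     (\<lambda>i'. \<Sum>j<length \<pi>. mat_vec smult n (xw (take j \<pi>)) (z (\<pi> ! j)) i') i))"
proof -
  interpret pds ssum vsum smult omega n M
    using assms(1,6) by (simp add: pds_def pds_axioms_def)
  let ?xw = "\<lambda>\<pi>. mat_listprod n (map (\<lambda>p. T [p] []) \<pi>)"
  have X: "T [p] [] i j = SS UNIV (\<lambda>\<pi>. mat_mult n (M [p] \<pi>) (?xw \<pi>) i j)" if "i < n" "j < n" for p i j
  proof -
    have "T [p] [] i j = SS UNIV (\<lambda>\<pi>. \<Sum>k<n. M [p] \<pi> i k * T \<pi> [] k j)" by (rule T_x[OF that])
    also have "\<dots> = SS UNIV (\<lambda>\<pi>. mat_mult n (M [p] \<pi>) (?xw \<pi>) i j)"
      unfolding mat_mult_def by (intro S_cong sum.cong refl arg_cong2[where f="(*)"]) (simp add: xw_T that)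
    finally show ?thesis .
  qed
  have Z: "OS l UNIV [p] i = VS {\<pi>. \<pi> \<noteq> []} (\<lambda>\<pi>. mat_vec smult n (M [p] \<pi>)
              (\<lambda>i'. \<Sum>j<length \<pi>. mat_vec smult n (?xw (take j \<pi>)) (OS l UNIV [\<pi> ! j]) i') i)" if "i < n" for p i
  proof -
    have "OS l UNIV [p] i = VS UNIV (\<lambda>\<pi>. \<Sum>k<n. smult (M [p] \<pi> i k) (OS l UNIV \<pi> k))"
      by (subst UQ) simp
    also have "\<dots> = VS {\<pi>. \<pi> \<noteq> []} (\<lambda>\<pi>. \<Sum>k<n. smult (M [p] \<pi> i k) (OS l UNIV \<pi> k))"
      by (rule V_zero_outside) (auto simp: small_lists Om_nil smult_zero_right)
    also have "\<dots> = VS {\<pi>. \<pi> \<noteq> []} (\<lambda>\<pi>. mat_vec smult n (M [p] \<pi>)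
              (\<lambda>i'. \<Sum>j<length \<pi>. mat_vec smult n (?xw (take j \<pi>)) (OS l UNIV [\<pi> ! j]) i') i)"
    proof (rule V_cong)
      fix \<pi>
      show "(\<Sum>k<n. smult (M [p] \<pi> i k) (OS l UNIV \<pi> k)) = mat_vec smult n (M [p] \<pi>)
              (\<lambda>i'. \<Sum>j<length \<pi>. mat_vec smult n (?xw (take j \<pi>)) (OS l UNIV [\<pi> ! j]) i') i"
        apply (simp only: mat_vec_def[of smult n "M [p] \<pi>"])
        apply (intro sum.cong refl arg_cong2[where f=smult])
        apply (rule Om_list)
        apply simp
        done
    qed
    finally show ?thesis .
  qed
  show ?thesis
    unfolding Let_def bmat_omega_OS using X Z by auto
qed


end
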